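(* Let $\mathbb{A}$ be a 2-category having the two-dimensional cokernel diagram of a 1-cell $p:e\to b$. Then: (1) provided that a right Kan extension $\mathrm{Ran}_pp$ of $p$ along $p$ exists and is preserved by $\delta^0:b\to b\uparrow_pb$, $p$ is monadic if and only if $p$ is an effective faithful morphism; (2) provided that a left Kan extension $\mathrm{Lan}_pp$ of $p$ along $p$ exists and is preserved by $\delta^1:b\to b\uparrow_pb$, $p$ is comonadic if and only if $p$ is an effective faithful morphism.
   Context: A 2-category is a $\mathbf{Cat}$-enriched category; composition of 1-cells is juxtaposition, vertical composition of 2-cells is $\cdot$, horizontal composition is $\ast$, $\mathrm{id}_f$ is the identity 2-cell on $f$. $\mathbb{A}^{\mathrm{co}}$ is obtained from $\mathbb{A}$ by reversing 2-cells. A 1-cell is an equivalence if it has a pseudo-inverse up to invertible 2-cells. Opcomma object of $p$ along itself: $b\uparrow_p b$ with $\delta^0,\delta^1:b\to b\uparrow_pb$ and $\alpha:\delta^1p\Rightarrow\delta^0p$ such that for every $y$, $h\mapsto(h\delta^0,h\delta^1,\mathrm{id}_h\ast\alpha)$, $\xi\mapsto(\xi\ast\mathrm{id}_{\delta^0},\xi\ast\mathrm{id}_{\delta^1})$ is an isomorphism from $\mathbb{A}(b\uparrow_pb,y)$ onto the category of triples $(h_0,h_1:b\to y,\beta:h_1p\Rightarrow h_0p)$ with morphisms pairs $(\xi_0,\xi_1)$ with $(\xi_0\ast\mathrm{id}_p)\cdot\beta=\beta'\cdot(\xi_1\ast\mathrm{id}_p)$. A two-dimensional pushout of a span $f_0:c\to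 c_0$, $f_1:c\to c_1$ is $P$ with $q_0,q_1$, $q_0f_0=q_1f_1$, such that $k\mapsto(kq_0,kq_1)$ is an isomorphism from $\mathbb{A}(P,y)$ onto the category of pairs $(k_0,k_1)$ with $k_0f_0=k_1f_1$ and morphisms pairs of 2-cells $(\xi_0,\xi_1)$ with $\xi_0\ast\mathrm{id}_{f_0}=\xi_1\ast\mathrm{id}_{f_1}$. $\mathbb{A}$ has the two-dimensional cokernel diagram of $p$ if it has $b\uparrow_pb$ and a two-dimensional pushout $b\uparrow_pb\uparrow_pb$ of $(\delta^0,\delta^1)$ with $D^0,D^2$, $D^2\delta^0=D^0\delta^1$; $D^1$ is the unique 1-cell with $D^1\delta^1=D^2\delta^1$, $D^1\delta^0=D^0\delta^0$, $\mathrm{id}_{D^1}\ast\alpha=(\mathrm{id}_{D^0}\ast\alpha)\cdot(\mathrm{id}_{D^2}\ast\alpha)$; $s^0$ is the unique 1-cell with $s^0\delta^0=s^0\delta^1=\mathrm{id}_b$, $\mathrm{id}_{s^0}\ast\alpha=\mathrm{id}_p$. Effective faithful: $\mathrm{Desc}_p(y)$ has objects $(h:y\to b,\beta:\delta^1h\Rightarrow\delta^0h)$ with $(\mathrm{id}_{D^0}\ast\beta)\cdot(\mathrm{id}_{D^2}\ast\beta)=\mathrm{id}_{D^1}\ast\beta$, $\mathrm{id}_{s^0}\ast\beta=\mathrm{id}_h$, morphisms 2-cells $\xi:h_1\Rightarrow h_0$ with $\beta_0\cdot(\mathrm{id}_{\delta^1}\ast\xi)=(\mathrm{id}_{\delta^0}\ast\xi)\cdot\beta_1$.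 A lax descent object is $L$ with $d:L\to b$, $\Psi:\delta^1d\Rightarrow\delta^0d$ such that $g\mapsto(dg,\Psi\ast\mathrm{id}_g)$, $\xi\mapsto\mathrm{id}_d\ast\xi$ is an isomorphism $\mathbb{A}(y,L)\cong\mathrm{Desc}_p(y)$ for all $y$; $p^H$ is the unique 1-cell with $dp^H=p$, $\Psi\ast\mathrm{id}_{p^H}=\alpha$. $p$ is an effective faithful morphism if $\mathbb{A}$ has the two-dimensional cokernel diagram of $p$, a lax descent object of it, and $p^H$ is an equivalence. Right Kan extension of $f$ along $g$: $(r,\gamma:rg\Rightarrow f)$ such that $\beta\mapsto\gamma\cdot(\beta\ast\mathrm{id}_g)$ is a bijection from 2-cells $k\Rightarrow r$ to 2-cells $kg\Rightarrow f$ for all $k$; a 1-cell $\delta$ preserves it if $(\delta r,\mathrm{id}_\delta\ast\gamma)$ is a right Kan extension of $\delta f$ along $g$. Codensity monad: from a right Kan extension $(t,\gamma)$ of $p$ along $p$, $(b,t,m,\eta)$ with $m$ unique such that $\gamma\cdot(m\ast\mathrm{id}_p)=\gamma\cdot(\mathrm{id}_t\ast\gamma)$ and $\eta$ unique with $\gamma\cdot(\eta\ast\mathrm{id}_p)=\mathrm{id}_p$. An Eilenberg–Moore object of a monad $\mathsf{T}=(b,t,m,\eta)$ is $b^{\mathsf{T}}$ with $u:b^{\mathsf{T}}\to b$, $\mu:tu\Rightarrow u$ such that $g\mapsto(ug,\mu\ast\mathrm{id}_g)$ is an isomorphism from $\mathbb{A}(y,b^{\mathsf{T}})$ onto the category of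 pairs $(h,\beta:th\Rightarrow h)$ with $\beta\cdot(\mathrm{id}_t\ast\beta)=\beta\cdot(m\ast\mathrm{id}_h)$, $\beta\cdot(\eta\ast\mathrm{id}_h)=\mathrm{id}_h$ (morphisms $\xi$ with $\xi\cdot\beta_1=\beta_0\cdot(\mathrm{id}_t\ast\xi)$). $p$ is monadic if it has a codensity monad $\mathsf{T}$, $\mathbb{A}$ has an Eilenberg–Moore object of $\mathsf{T}$, and the unique $p^{\mathsf{T}}$ with $up^{\mathsf{T}}=p$, $\mu\ast\mathrm{id}_{p^{\mathsf{T}}}=\gamma$ is an equivalence. Duals: a left Kan extension in $\mathbb{A}$ (and its preservation) means a right Kan extension (and its preservation) in $\mathbb{A}^{\mathrm{co}}$; $p$ is comonadic if the corresponding 1-cell of $\mathbb{A}^{\mathrm{co}}$ is monadic in $\mathbb{A}^{\mathrm{co}}$. *)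

theory Defs
  imports Main
begin

text \<open>Objects of type 'o, 1-cells of type 'a, 2-cells of type 'c.
  cmp g f is the composite "g f" (f first); vc beta alpha is beta . alpha
  (alpha first); hc beta alpha is beta * alpha where alpha is the 2-cell on the
  right (first) 1-cells; i2 f is id_f; ide x is the identity 1-cell.\<close>

record ('o,'a,'c) tcat =
  Obj  :: "'o set"
  Arr  :: "'a set"
  src  :: "'a \<Rightarrow> 'o"
  trg  :: "'a \<Rightarrow> 'o"
  Cell :: "'c set"
  dom2 :: "'c \<Rightarrow> 'a"
  cod2 :: "'c \<Rightarrow> 'a"
  cmp  :: "'a \<Rightarrow> 'a \<Rightarrow> 'a"
  ide  :: "'o \<Rightarrow> 'a"
  vc   :: "'c \<Rightarrow> 'c \<Rightarrow> 'c"
  hc   :: "'c \<Rightarrow> 'c \<Rightarrow> 'c"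
  i2   :: "'a \<Rightarrow> 'c"

definition hom :: "('o,'a,'c) tcat \<Rightarrow> 'o \<Rightarrow> 'o \<Rightarrow> 'a set" where
  "hom C x y = {f \<in> Arr C. src C f = x \<and> trg C f = y}"

definition cells :: "('o,'a,'c) tcat \<Rightarrow> 'a \<Rightarrow> 'a \<Rightarrow> 'c set" where
  "cells C f g = {\<theta> \<in> Cell C. dom2 C \<theta> = f \<and> cod2 C \<theta> = g}"

definition twocat :: "('o,'a,'c) tcat \<Rightarrow> bool" where
  "twocat C \<longleftrightarrow>
     (\<forall>f \<in> Arr C. src C f \<in> Obj C \<and> trg C f \<in> Obj C) \<and>
     (\<forall>x \<in> Obj C. ide C x \<in> hom C x x) \<and>
     (\<forall>f g. f \<in> Arr C \<longrightarrow> g \<in> Arr C \<longrightarrow> trg C f = src C g \<longrightarrow>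
        cmp C g f \<in> hom C (src C f) (trg C g)) \<and>
     (\<forall>f \<in> Arr C. cmp C f (ide C (src C f)) = f \<and> cmp C (ide C (trg C f)) f = f) \<and>
     (\<forall>f g h. f \<in> Arr C \<longrightarrow> g \<in> Arr C \<longrightarrow> h \<in> Arr C \<longrightarrow>
        trg C f = src C g \<longrightarrow> trg C g = src C h \<longrightarrow>
        cmp C h (cmp C g f) = cmp C (cmp C h g) f) \<and>
     (\<forall>\<theta> \<in> Cell C. dom2 C \<theta> \<in> Arr C \<and> cod2 C \<theta> \<in> Arr C \<and>
        src C (dom2 C \<theta>) = src C (cod2 C \<theta>) \<and> trg C (dom2 C \<theta>) = trg C (cod2 C \<theta>)) \<and>
     (\<forall>f \<in> Arr C. i2 C f \<in> cells C f f) \<and>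
     (\<forall>f g h \<alpha> \<beta>. \<alpha> \<in> cells C f g \<longrightarrow> \<beta> \<in> cells C g h \<longrightarrow> vc C \<beta> \<alpha> \<in> cells C f h) \<and>
     (\<forall>f g \<alpha>. \<alpha> \<in> cells C f g \<longrightarrow> vc C \<alpha> (i2 C f) = \<alpha> \<and> vc C (i2 C g) \<alpha> = \<alpha>) \<and>
     (\<forall>f g h k \<alpha> \<beta> \<gamma>. \<alpha> \<in> cells C f g \<longrightarrow> \<beta> \<in> cells C g h \<longrightarrow> \<gamma> \<in> cells C h k \<longrightarrow>
        vc C \<gamma> (vc C \<beta> \<alpha>) = vc C (vc C \<gamma> \<beta>) \<alpha>) \<and>
     (\<forall>f f' g g' \<alpha> \<beta>. \<alpha> \<in> cells C f f' \<longrightarrow> \<beta> \<in> cells C g g' \<longrightarrow> trg C f = src C g \<longrightarrow>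
        hc C \<beta> \<alpha> \<in> cells C (cmp C g f) (cmp C g' f')) \<and>
     (\<forall>f g. f \<in> Arr C \<longrightarrow> g \<in> Arr C \<longrightarrow> trg C f = src C g \<longrightarrow>
        hc C (i2 C g) (i2 C f) = i2 C (cmp C g f)) \<and>
     (\<forall>f f' f'' g g' g'' \<alpha> \<alpha>' \<beta> \<beta>'.
        \<alpha> \<in> cells C f f' \<longrightarrow> \<alpha>' \<in> cells C f' f'' \<longrightarrow>
        \<beta> \<in> cells C g g' \<longrightarrow> \<beta>' \<in> cells C g' g'' \<longrightarrow> trg C f = src C g \<longrightarrow>
        hc C (vc C \<beta>' \<beta>) (vc C \<alpha>' \<alpha>) = vc C (hc C \<beta>' \<alpha>') (hc C \<beta> \<alpha>)) \<and>
     (\<forall>f f' g g' h h' \<alpha> \<beta> \<gamma>. \<alpha> \<in> cells C f f' \<longrightarrow> \<beta> \<in> cells C g g' \<longrightarrow> \<gamma> \<in> cells C h h' \<longrightarrow>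
        trg C f = src C g \<longrightarrow> trg C g = src C h \<longrightarrow>
        hc C \<gamma> (hc C \<beta> \<alpha>) = hc C (hc C \<gamma> \<beta>) \<alpha>) \<and>
     (\<forall>f f' \<alpha>. \<alpha> \<in> cells C f f' \<longrightarrow>
        hc C (i2 C (ide C (trg C f))) \<alpha> = \<alpha> \<and> hc C \<alpha> (i2 C (ide C (src C f))) = \<alpha>)"

definition co :: "('o,'a,'c) tcat \<Rightarrow> ('o,'a,'c) tcat" where
  "co C = C\<lparr>dom2 := cod2 C, cod2 := dom2 C, vc := (\<lambda>\<beta> \<alpha>. vc C \<alpha> \<beta>)\<rparr>"

definition invertible2 :: "('o,'a,'c) tcat \<Rightarrow> 'c \<Rightarrow> bool" where
  "invertible2 C \<theta> \<longleftrightarrow> \<theta> \<in> Cell C \<and>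
     (\<exists>\<theta>' \<in> cells C (cod2 C \<theta>) (dom2 C \<theta>).
        vc C \<theta>' \<theta> = i2 C (dom2 C \<theta>) \<and> vc C \<theta> \<theta>' = i2 C (cod2 C \<theta>))"

definition equivalence :: "('o,'a,'c) tcat \<Rightarrow> 'a \<Rightarrow> bool" where
  "equivalence C f \<longleftrightarrow> f \<in> Arr C \<and>
     (\<exists>g \<in> hom C (trg C f) (src C f).
        (\<exists>\<eta> \<in> cells C (ide C (src C f)) (cmp C g f). invertible2 C \<eta>) \<and>
        (\<exists>\<epsilon> \<in> cells C (cmp C f g) (ide C (trg C f)). invertible2 C \<epsilon>))"

text \<open>Opcomma object (P, d0, d1, alpha) of p along itself; b = trg p.
  "Isomorphism of categories" is spelled out as bijectivity on objects and
  on each hom-set of the comparison functor.\<close>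
definition opcomma :: "('o,'a,'c) tcat \<Rightarrow> 'a \<Rightarrow> 'o \<Rightarrow> 'a \<Rightarrow> 'a \<Rightarrow> 'c \<Rightarrow> bool" where
  "opcomma C p P d0 d1 \<alpha> \<longleftrightarrow>
     p \<in> Arr C \<and> P \<in> Obj C \<and> d0 \<in> hom C (trg C p) P \<and> d1 \<in> hom C (trg C p) P \<and>
     \<alpha> \<in> cells C (cmp C d1 p) (cmp C d0 p) \<and>
     (\<forall>y \<in> Obj C.
        bij_betw (\<lambda>h. (cmp C h d0, cmp C h d1, hc C (i2 C h) \<alpha>)) (hom C P y)
          {(h0, h1, \<beta>). h0 \<in> hom C (trg C p) y \<and> h1 \<in> hom C (trg C p) y \<and>
                       \<beta> \<in> cells C (cmp C h1 p) (cmp C h0 p)} \<and>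
        (\<forall>h \<in> hom C P y. \<forall>h' \<in> hom C P y.
          bij_betw (\<lambda>\<xi>. (hc C \<xi> (i2 C d0), hc C \<xi> (i2 C d1))) (cells C h h')
            {(\<xi>0, \<xi>1). \<xi>0 \<in> cells C (cmp C h d0) (cmp C h' d0) \<and>
                       \<xi>1 \<in> cells C (cmp C h d1) (cmp C h' d1) \<and>
                       vc C (hc C \<xi>0 (i2 C p)) (hc C (i2 C h) \<alpha>) =
                       vc C (hc C (i2 C h') \<alpha>) (hc C \<xi>1 (i2 C p))}))"

definition pushout2 :: "('o,'a,'c) tcat \<Rightarrow> 'a \<Rightarrow> 'a \<Rightarrow> 'o \<Rightarrow> 'a \<Rightarrow> 'a \<Rightarrow> bool" where
  "pushout2 C f0 f1 P q0 q1 \<longleftrightarrow>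
     f0 \<in> Arr C \<and> f1 \<in> Arr C \<and> src C f0 = src C f1 \<and> P \<in> Obj C \<and>
     q0 \<in> hom C (trg C f0) P \<and> q1 \<in> hom C (trg C f1) P \<and> cmp C q0 f0 = cmp C q1 f1 \<and>
     (\<forall>y \<in> Obj C.
        bij_betw (\<lambda>k. (cmp C k q0, cmp C k q1)) (hom C P y)
          {(k0, k1). k0 \<in> hom C (trg C f0) y \<and> k1 \<in> hom C (trg C f1) y \<and>
                     cmp C k0 f0 = cmp C k1 f1} \<and>
        (\<forall>k \<in> hom C P y. \<forall>k' \<in> hom C P y.
          bij_betw (\<lambda>\<xi>. (hc C \<xi> (i2 C q0), hc C \<xi> (i2 C q1))) (cells C k k')
            {(\<xi>0, \<xi>1). \<xi>0 \<in> cells C (cmp C k q0) (cmp C k' q0) \<and>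
                       \<xi>1 \<in> cells C (cmp C k q1) (cmp C k' q1) \<and>
                       hc C \<xi>0 (i2 C f0) = hc C \<xi>1 (i2 C f1)}))"

text \<open>The two-dimensional cokernel diagram of p: an opcomma object
  (P, d0, d1, alpha) together with a two-dimensional pushout P3 of (d0, d1)
  with legs D2 (along d0) and D0 (along d1), so D2 d0 = D0 d1.\<close>
definition cokernel_diagram ::
  "('o,'a,'c) tcat \<Rightarrow> 'a \<Rightarrow> 'o \<Rightarrow> 'a \<Rightarrow> 'a \<Rightarrow> 'c \<Rightarrow> 'o \<Rightarrow> 'a \<Rightarrow> 'a \<Rightarrow> bool" where
  "cokernel_diagram C p P d0 d1 \<alpha> P3 D0 D2 \<longleftrightarrow>
     opcomma C p P d0 d1 \<alpha> \<and> pushout2 C d0 d1 P3 D2 D0"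

definition cokD1 :: "('o,'a,'c) tcat \<Rightarrow> 'a \<Rightarrow> 'o \<Rightarrow> 'a \<Rightarrow> 'a \<Rightarrow> 'c \<Rightarrow> 'o \<Rightarrow> 'a \<Rightarrow> 'a \<Rightarrow> 'a" where
  "cokD1 C p P d0 d1 \<alpha> P3 D0 D2 = (THE h. h \<in> hom C P P3 \<and>
      cmp C h d1 = cmp C D2 d1 \<and> cmp C h d0 = cmp C D0 d0 \<and>
      hc C (i2 C h) \<alpha> = vc C (hc C (i2 C D0) \<alpha>) (hc C (i2 C D2) \<alpha>))"

definition cokS0 :: "('o,'a,'c) tcat \<Rightarrow> 'a \<Rightarrow> 'o \<Rightarrow> 'a \<Rightarrow> 'a \<Rightarrow> 'c \<Rightarrow> 'a" where
  "cokS0 C p P d0 d1 \<alpha> = (THE h. h \<in> hom C P (trg C p) \<and>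
      cmp C h d0 = ide C (trg C p) \<and> cmp C h d1 = ide C (trg C p) \<and>
      hc C (i2 C h) \<alpha> = i2 C p)"

definition desc_obj ::
  "('o,'a,'c) tcat \<Rightarrow> 'a \<Rightarrow> 'o \<Rightarrow> 'a \<Rightarrow> 'a \<Rightarrow> 'c \<Rightarrow> 'o \<Rightarrow> 'a \<Rightarrow> 'a \<Rightarrow> 'o \<Rightarrow> ('a \<times> 'c) set" where
  "desc_obj C p P d0 d1 \<alpha> P3 D0 D2 y =
     {(h, \<beta>). h \<in> hom C y (trg C p) \<and> \<beta> \<in> cells C (cmp C d1 h) (cmp C d0 h) \<and>
        vc C (hc C (i2 C D0) \<beta>) (hc C (i2 C D2) \<beta>) =
          hc C (i2 C (cokD1 C p P d0 d1 \<alpha> P3 D0 D2)) \<beta> \<and>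
        hc C (i2 C (cokS0 C p P d0 d1 \<alpha>)) \<beta> = i2 C h}"

text \<open>Morphisms of Desc_p(y) from (h1, beta1) to (h0, beta0).\<close>
definition desc_mor ::
  "('o,'a,'c) tcat \<Rightarrow> 'a \<Rightarrow> 'a \<Rightarrow> 'a \<Rightarrow> 'c \<Rightarrow> 'a \<Rightarrow> 'c \<Rightarrow> 'c set" where
  "desc_mor C d0 d1 h1 \<beta>1 h0 \<beta>0 =
     {\<xi> \<in> cells C h1 h0. vc C \<beta>0 (hc C (i2 C d1) \<xi>) = vc C (hc C (i2 C d0) \<xi>) \<beta>1}"

definition lax_descent ::
  "('o,'a,'c) tcat \<Rightarrow> 'a \<Rightarrow> 'o \<Rightarrow> 'a \<Rightarrow> 'a \<Rightarrow> 'c \<Rightarrow> 'o \<Rightarrow> 'a \<Rightarrow> 'a \<Rightarrow> 'o \<Rightarrow> 'a \<Rightarrow> 'c \<Rightarrow> bool" where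
  "lax_descent C p P d0 d1 \<alpha> P3 D0 D2 L d \<Psi> \<longleftrightarrow>
     L \<in> Obj C \<and> d \<in> hom C L (trg C p) \<and> \<Psi> \<in> cells C (cmp C d1 d) (cmp C d0 d) \<and>
     (\<forall>y \<in> Obj C.
        bij_betw (\<lambda>g. (cmp C d g, hc C \<Psi> (i2 C g))) (hom C y L)
          (desc_obj C p P d0 d1 \<alpha> P3 D0 D2 y) \<and>
        (\<forall>g \<in> hom C y L. \<forall>g' \<in> hom C y L.
          bij_betw (\<lambda>\<xi>. hc C (i2 C d) \<xi>) (cells C g g')
            (desc_mor C d0 d1 (cmp C d g) (hc C \<Psi> (i2 C g)) (cmp C d g') (hc C \<Psi> (i2 C g')))))"

definition pH :: "('o,'a,'c) tcat \<Rightarrow> 'a \<Rightarrow> 'c \<Rightarrow> 'o \<Rightarrow> 'a \<Rightarrow> 'c \<Rightarrow> 'a" where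
  "pH C p \<alpha> L d \<Psi> = (THE k. k \<in> hom C (src C p) L \<and> cmp C d k = p \<and> hc C \<Psi> (i2 C k) = \<alpha>)"

definition effective_faithful ::
  "('o,'a,'c) tcat \<Rightarrow> 'a \<Rightarrow> 'o \<Rightarrow> 'a \<Rightarrow> 'a \<Rightarrow> 'c \<Rightarrow> 'o \<Rightarrow> 'a \<Rightarrow> 'a \<Rightarrow> bool" where
  "effective_faithful C p P d0 d1 \<alpha> P3 D0 D2 \<longleftrightarrow>
     cokernel_diagram C p P d0 d1 \<alpha> P3 D0 D2 \<and>
     (\<exists>L d \<Psi>. lax_descent C p P d0 d1 \<alpha> P3 D0 D2 L d \<Psi> \<and> equivalence C (pH C p \<alpha> L d \<Psi>))"

definition ran :: "('o,'a,'c) tcat \<Rightarrow> 'a \<Rightarrow> 'a \<Rightarrow> 'a \<Rightarrow> 'c \<Rightarrow> bool" where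
  "ran C g f r \<gamma> \<longleftrightarrow>
     g \<in> Arr C \<and> f \<in> Arr C \<and> src C g = src C f \<and>
     r \<in> hom C (trg C g) (trg C f) \<and> \<gamma> \<in> cells C (cmp C r g) f \<and>
     (\<forall>k \<in> hom C (trg C g) (trg C f).
        bij_betw (\<lambda>\<beta>. vc C \<gamma> (hc C \<beta> (i2 C g))) (cells C k r) (cells C (cmp C k g) f))"

definition preserves_ran :: "('o,'a,'c) tcat \<Rightarrow> 'a \<Rightarrow> 'a \<Rightarrow> 'a \<Rightarrow> 'c \<Rightarrow> 'a \<Rightarrow> bool" where
  "preserves_ran C g f r \<gamma> \<delta> \<longleftrightarrow>
     \<delta> \<in> Arr C \<and> src C \<delta> = trg C f \<and> ran C g (cmp C \<delta> f) (cmp C \<delta> r) (hc C (i2 C \<delta>) \<gamma>)"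

definition lan :: "('o,'a,'c) tcat \<Rightarrow> 'a \<Rightarrow> 'a \<Rightarrow> 'a \<Rightarrow> 'c \<Rightarrow> bool" where
  "lan C g f r \<gamma> \<longleftrightarrow> ran (co C) g f r \<gamma>"

definition preserves_lan :: "('o,'a,'c) tcat \<Rightarrow> 'a \<Rightarrow> 'a \<Rightarrow> 'a \<Rightarrow> 'c \<Rightarrow> 'a \<Rightarrow> bool" where
  "preserves_lan C g f r \<gamma> \<delta> \<longleftrightarrow> preserves_ran (co C) g f r \<gamma> \<delta>"

definition cod_mult :: "('o,'a,'c) tcat \<Rightarrow> 'a \<Rightarrow> 'a \<Rightarrow> 'c \<Rightarrow> 'c" where
  "cod_mult C p t \<gamma> = (THE m. m \<in> cells C (cmp C t t) t \<and>
      vc C \<gamma> (hc C m (i2 C p)) = vc C \<gamma> (hc C (i2 C t) \<gamma>))"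

definition cod_unit :: "('o,'a,'c) tcat \<Rightarrow> 'a \<Rightarrow> 'a \<Rightarrow> 'c \<Rightarrow> 'c" where
  "cod_unit C p t \<gamma> = (THE \<eta>. \<eta> \<in> cells C (ide C (trg C p)) t \<and>
      vc C \<gamma> (hc C \<eta> (i2 C p)) = i2 C p)"

definition em_object ::
  "('o,'a,'c) tcat \<Rightarrow> 'o \<Rightarrow> 'a \<Rightarrow> 'c \<Rightarrow> 'c \<Rightarrow> 'o \<Rightarrow> 'a \<Rightarrow> 'c \<Rightarrow> bool" where
  "em_object C b t m \<eta> B u \<mu> \<longleftrightarrow>
     B \<in> Obj C \<and> u \<in> hom C B b \<and> \<mu> \<in> cells C (cmp C t u) u \<and>
     (\<forall>y \<in> Obj C.
        bij_betw (\<lambda>g. (cmp C u g, hc C \<mu> (i2 C g))) (hom C y B)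
          {(h, \<beta>). h \<in> hom C y b \<and> \<beta> \<in> cells C (cmp C t h) h \<and>
             vc C \<beta> (hc C (i2 C t) \<beta>) = vc C \<beta> (hc C m (i2 C h)) \<and>
             vc C \<beta> (hc C \<eta> (i2 C h)) = i2 C h} \<and>
        (\<forall>g \<in> hom C y B. \<forall>g' \<in> hom C y B.
          bij_betw (\<lambda>\<xi>. hc C (i2 C u) \<xi>) (cells C g g')
            {\<xi> \<in> cells C (cmp C u g) (cmp C u g').
               vc C \<xi> (hc C \<mu> (i2 C g)) = vc C (hc C \<mu> (i2 C g')) (hc C (i2 C t) \<xi>)}))"

definition pT :: "('o,'a,'c) tcat \<Rightarrow> 'a \<Rightarrow> 'c \<Rightarrow> 'o \<Rightarrow> 'a \<Rightarrow> 'c \<Rightarrow> 'a" where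
  "pT C p \<gamma> B u \<mu> = (THE k. k \<in> hom C (src C p) B \<and> cmp C u k = p \<and> hc C \<mu> (i2 C k) = \<gamma>)"

definition monadic :: "('o,'a,'c) tcat \<Rightarrow> 'a \<Rightarrow> bool" where
  "monadic C p \<longleftrightarrow>
     (\<exists>t \<gamma>. ran C p p t \<gamma> \<and>
        (\<exists>B u \<mu>. em_object C (trg C p) t (cod_mult C p t \<gamma>) (cod_unit C p t \<gamma>) B u \<mu> \<and>
                  equivalence C (pT C p \<gamma> B u \<mu>)))"

definition comonadic :: "('o,'a,'c) tcat \<Rightarrow> 'a \<Rightarrow> bool" where
  "comonadic C p \<longleftrightarrow> monadic (co C) p"

end

theory Submission
  imports Defs
begin

locale tc =
  fixes C :: "('o,'a,'c) tcat"
  assumes tc: "twocat C"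
begin

abbreviation "M \<equiv> cmp C"
abbreviation "V \<equiv> vc C"
abbreviation "H \<equiv> hc C"
abbreviation "I \<equiv> i2 C"

lemma hom_arr: "f \<in> hom C x y \<Longrightarrow> f \<in> Arr C \<and> src C f = x \<and> trg C f = y"
  by (simp add: hom_def)

lemma homI: "f \<in> Arr C \<Longrightarrow> f \<in> hom C (src C f) (trg C f)"
  by (simp add: hom_def)

lemma hom_obj: "f \<in> hom C x y \<Longrightarrow> x \<in> Obj C \<and> y \<in> Obj C"
  using tc unfolding twocat_def hom_def by (elim conjE) blast

lemma ide_hom: "x \<in> Obj C \<Longrightarrow> ide C x \<in> hom C x x"
  using tc unfolding twocat_def by (elim conjE) blast

lemma cmp_hom: "f \<in> hom C x y \<Longrightarrow> g \<in> hom C y z \<Longrightarrow> M g f \<in> hom C x z"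
  using tc unfolding twocat_def hom_def by (elim conjE) auto

lemma cmp_ide_r: "f \<in> hom C x y \<Longrightarrow> M f (ide C x) = f"
  using tc unfolding twocat_def hom_def by (elim conjE) auto

lemma cmp_ide_l: "f \<in> hom C x y \<Longrightarrow> M (ide C y) f = f"
  using tc unfolding twocat_def hom_def by (elim conjE) auto

lemma cmp_assoc: "f \<in> hom C x y \<Longrightarrow> g \<in> hom C y z \<Longrightarrow> h \<in> hom C z w \<Longrightarrow>
   M h (M g f) = M (M h g) f"
  using tc unfolding twocat_def hom_def by (elim conjE) auto

lemma cells_hom: "\<theta> \<in> cells C f g \<Longrightarrow> f \<in> hom C x y \<Longrightarrow> g \<in> hom C x y"
  using tc unfolding twocat_def hom_def cells_def by (elim conjE) auto

lemma cells_hom': "\<theta> \<in> cells C f g \<Longrightarrow> g \<in> hom C x y \<Longrightarrow> f \<in> hom C x y"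
  using tc unfolding twocat_def hom_def cells_def by (elim conjE) auto

lemma i2_cells: "f \<in> hom C x y \<Longrightarrow> I f \<in> cells C f f"
  using tc unfolding twocat_def hom_def by (elim conjE) auto

lemma vc_cells: "\<alpha> \<in> cells C f g \<Longrightarrow> \<beta> \<in> cells C g h \<Longrightarrow> V \<beta> \<alpha> \<in> cells C f h"
  using tc unfolding twocat_def by (elim conjE) blast

lemma hc_cells: "\<alpha> \<in> cells C f f' \<Longrightarrow> \<beta> \<in> cells C g g' \<Longrightarrow> f \<in> hom C x y \<Longrightarrow> g \<in> hom C y z \<Longrightarrow>
   H \<beta> \<alpha> \<in> cells C (M g f) (M g' f')"
  using tc unfolding twocat_def hom_def by (elim conjE) auto

lemma vc_idl: "\<alpha> \<in> cells C f g \<Longrightarrow> V (I g) \<alpha> = \<alpha>"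
  using tc unfolding twocat_def by (elim conjE) blast

lemma vc_idr: "\<alpha> \<in> cells C f g \<Longrightarrow> V \<alpha> (I f) = \<alpha>"
  using tc unfolding twocat_def by (elim conjE) blast

lemma vc_assoc: "\<alpha> \<in> cells C f g \<Longrightarrow> \<beta> \<in> cells C g h \<Longrightarrow> \<gamma> \<in> cells C h k \<Longrightarrow>
   V \<gamma> (V \<beta> \<alpha>) = V (V \<gamma> \<beta>) \<alpha>"
proof -
  assume a: "\<alpha> \<in> cells C f g" "\<beta> \<in> cells C g h" "\<gamma> \<in> cells C h k"
  have "\<forall>f g h k \<alpha> \<beta> \<gamma>. \<alpha> \<in> cells C f g \<longrightarrow> \<beta> \<in> cells C g h \<longrightarrow> \<gamma> \<in> cells C h k \<longrightarrow>
        V \<gamma> (V \<beta> \<alpha>) = V (V \<gamma> \<beta>) \<alpha>" using tc unfolding twocat_def by (elim conjE)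
  thus ?thesis using a by blast
qed

lemma hc_i2: "f \<in> hom C x y \<Longrightarrow> g \<in> hom C y z \<Longrightarrow> H (I g) (I f) = I (M g f)"
  using tc unfolding twocat_def hom_def by (elim conjE) auto

lemma interchange:
  "\<alpha> \<in> cells C f f' \<Longrightarrow> \<alpha>' \<in> cells C f' f'' \<Longrightarrow> \<beta> \<in> cells C g g' \<Longrightarrow> \<beta>' \<in> cells C g' g'' \<Longrightarrow>
   f \<in> hom C x y \<Longrightarrow> g \<in> hom C y z \<Longrightarrow> H (V \<beta>' \<beta>) (V \<alpha>' \<alpha>) = V (H \<beta>' \<alpha>') (H \<beta> \<alpha>)"
  using tc unfolding twocat_def hom_def by (elim conjE) auto

lemma hc_assoc:
  "\<alpha> \<in> cells C f f' \<Longrightarrow> \<beta> \<in> cells C g g' \<Longrightarrow> \<gamma> \<in> cells C h h' \<Longrightarrow>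
   f \<in> hom C x y \<Longrightarrow> g \<in> hom C y z \<Longrightarrow> h \<in> hom C z w \<Longrightarrow> H \<gamma> (H \<beta> \<alpha>) = H (H \<gamma> \<beta>) \<alpha>"
  using tc unfolding twocat_def hom_def by (elim conjE) auto

lemma hc_unit_l: "\<alpha> \<in> cells C f f' \<Longrightarrow> f \<in> hom C x y \<Longrightarrow> H (I (ide C y)) \<alpha> = \<alpha>"
  using tc unfolding twocat_def hom_def by (elim conjE) auto

lemma hc_unit_r: "\<alpha> \<in> cells C f f' \<Longrightarrow> f \<in> hom C x y \<Longrightarrow> H \<alpha> (I (ide C x)) = \<alpha>"
  using tc unfolding twocat_def hom_def by (elim conjE) auto

lemma wl_cells: "\<alpha> \<in> cells C f f' \<Longrightarrow> f \<in> hom C x y \<Longrightarrow> k \<in> hom C y z \<Longrightarrow>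
   H (I k) \<alpha> \<in> cells C (M k f) (M k f')"
  by (rule hc_cells[OF _ i2_cells]) auto

lemma wr_cells: "\<alpha> \<in> cells C f f' \<Longrightarrow> f \<in> hom C y z \<Longrightarrow> k \<in> hom C x y \<Longrightarrow>
   H \<alpha> (I k) \<in> cells C (M f k) (M f' k)"
  by (rule hc_cells[OF i2_cells]) auto

lemma wl_vc: "\<alpha> \<in> cells C f g \<Longrightarrow> \<beta> \<in> cells C g h \<Longrightarrow> f \<in> hom C x y \<Longrightarrow> k \<in> hom C y z \<Longrightarrow>
   H (I k) (V \<beta> \<alpha>) = V (H (I k) \<beta>) (H (I k) \<alpha>)"
proof -
  assume a: "\<alpha> \<in> cells C f g" "\<beta> \<in> cells C g h" "f \<in> hom C x y" "k \<in> hom C y z"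
  have "I k = V (I k) (I k)" using vc_idl[OF i2_cells[OF a(4)]] by simp
  hence "H (I k) (V \<beta> \<alpha>) = H (V (I k) (I k)) (V \<beta> \<alpha>)" by simp
  also have "\<dots> = V (H (I k) \<beta>) (H (I k) \<alpha>)"
    by (rule interchange[OF a(1,2) i2_cells[OF a(4)] i2_cells[OF a(4)] a(3,4)])
  finally show ?thesis .
qed

lemma wr_vc: "\<alpha> \<in> cells C f g \<Longrightarrow> \<beta> \<in> cells C g h \<Longrightarrow> f \<in> hom C y z \<Longrightarrow> k \<in> hom C x y \<Longrightarrow>
   H (V \<beta> \<alpha>) (I k) = V (H \<beta> (I k)) (H \<alpha> (I k))"
proof -
  assume a: "\<alpha> \<in> cells C f g" "\<beta> \<in> cells C g h" "f \<in> hom C y z" "k \<in> hom C x y"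
  have "I k = V (I k) (I k)" using vc_idl[OF i2_cells[OF a(4)]] by simp
  hence "H (V \<beta> \<alpha>) (I k) = H (V \<beta> \<alpha>) (V (I k) (I k))" by simp
  also have "\<dots> = V (H \<beta> (I k)) (H \<alpha> (I k))"
    by (rule interchange[OF i2_cells[OF a(4)] i2_cells[OF a(4)] a(1,2) a(4,3)])
  finally show ?thesis .
qed

lemma wll: "\<alpha> \<in> cells C a a' \<Longrightarrow> a \<in> hom C x y \<Longrightarrow> f \<in> hom C y z \<Longrightarrow> g \<in> hom C z w \<Longrightarrow>
   H (I g) (H (I f) \<alpha>) = H (I (M g f)) \<alpha>"
  using hc_assoc[OF _ i2_cells i2_cells] hc_i2 by metis

lemma wrr: "\<alpha> \<in> cells C a a' \<Longrightarrow> a \<in> hom C y z \<Longrightarrow> f \<in> hom C x y \<Longrightarrow> g \<in> hom C w x \<Longrightarrow>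
   H (H \<alpha> (I f)) (I g) = H \<alpha> (I (M f g))"
  using hc_assoc[OF i2_cells i2_cells] hc_i2 by metis

lemma wlr: "\<alpha> \<in> cells C a a' \<Longrightarrow> a \<in> hom C y z \<Longrightarrow> f \<in> hom C x y \<Longrightarrow> g \<in> hom C z w \<Longrightarrow>
   H (H (I g) \<alpha>) (I f) = H (I g) (H \<alpha> (I f))"
  using hc_assoc[OF i2_cells _ i2_cells] by metis

lemma hc_decomp1: "\<alpha> \<in> cells C f f' \<Longrightarrow> \<beta> \<in> cells C g g' \<Longrightarrow> f \<in> hom C x y \<Longrightarrow> g \<in> hom C y z \<Longrightarrow>
   H \<beta> \<alpha> = V (H \<beta> (I f')) (H (I g) \<alpha>)"
proof -
  assume a: "\<alpha> \<in> cells C f f'" "\<beta> \<in> cells C g g'" "f \<in> hom C x y" "g \<in> hom C y z"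
  have f': "f' \<in> hom C x y" using cells_hom a by blast
  have "H \<beta> \<alpha> = H (V \<beta> (I g)) (V (I f') \<alpha>)" using vc_idr[OF a(2)] vc_idl[OF a(1)] by simp
  also have "\<dots> = V (H \<beta> (I f')) (H (I g) \<alpha>)"
    by (rule interchange[OF a(1) i2_cells[OF f'] i2_cells[OF a(4)] a(2) a(3,4)])
  finally show ?thesis .
qed

lemma hc_decomp2: "\<alpha> \<in> cells C f f' \<Longrightarrow> \<beta> \<in> cells C g g' \<Longrightarrow> f \<in> hom C x y \<Longrightarrow> g \<in> hom C y z \<Longrightarrow>
   H \<beta> \<alpha> = V (H (I g') \<alpha>) (H \<beta> (I f))"
proof -
  assume a: "\<alpha> \<in> cells C f f'" "\<beta> \<in> cells C g g'" "f \<in> hom C x y" "g \<in> hom C y z"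
  have g': "g' \<in> hom C y z" using cells_hom a by blast
  have "H \<beta> \<alpha> = H (V (I g') \<beta>) (V \<alpha> (I f))" using vc_idl[OF a(2)] vc_idr[OF a(1)] by simp
  also have "\<dots> = V (H (I g') \<alpha>) (H \<beta> (I f))"
    by (rule interchange[OF i2_cells[OF a(3)] a(1) a(2) i2_cells[OF g'] a(3,4)])
  finally show ?thesis .
qed

lemma naturality: "\<alpha> \<in> cells C f f' \<Longrightarrow> \<beta> \<in> cells C g g' \<Longrightarrow> f \<in> hom C x y \<Longrightarrow> g \<in> hom C y z \<Longrightarrow>
   V (H \<beta> (I f')) (H (I g) \<alpha>) = V (H (I g') \<alpha>) (H \<beta> (I f))"
  using hc_decomp1 hc_decomp2 by metis


lemma hom_iff: "f \<in> hom C x y \<longleftrightarrow> f \<in> Arr C \<and> src C f = x \<and> trg C f = y"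
  by (simp add: hom_def)

lemma cells_arr: "\<theta> \<in> cells C f g \<Longrightarrow> f \<in> Arr C \<and> g \<in> Arr C \<and> src C g = src C f \<and> trg C g = trg C f"
  using tc unfolding twocat_def cells_def by (elim conjE) auto

lemma cmp_arr [simp]: "f \<in> Arr C \<Longrightarrow> g \<in> Arr C \<Longrightarrow> trg C f = src C g \<Longrightarrow> M g f \<in> Arr C"
  by (metis cmp_hom hom_iff)
lemma src_cmp [simp]: "f \<in> Arr C \<Longrightarrow> g \<in> Arr C \<Longrightarrow> trg C f = src C g \<Longrightarrow> src C (M g f) = src C f"
  by (metis cmp_hom hom_iff)
lemma trg_cmp [simp]: "f \<in> Arr C \<Longrightarrow> g \<in> Arr C \<Longrightarrow> trg C f = src C g \<Longrightarrow> trg C (M g f) = trg C g"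
  by (metis cmp_hom hom_iff)
lemma assoc_r [simp]: "f \<in> Arr C \<Longrightarrow> g \<in> Arr C \<Longrightarrow> h \<in> Arr C \<Longrightarrow> trg C f = src C g \<Longrightarrow> trg C g = src C h \<Longrightarrow>
   M (M h g) f = M h (M g f)"
  by (metis cmp_assoc hom_iff)
lemma ide_arr [simp]: "x \<in> Obj C \<Longrightarrow> ide C x \<in> Arr C"
  using ide_hom hom_arr by blast
lemma src_ide [simp]: "x \<in> Obj C \<Longrightarrow> src C (ide C x) = x"
  using ide_hom hom_arr by blast
lemma trg_ide [simp]: "x \<in> Obj C \<Longrightarrow> trg C (ide C x) = x"
  using ide_hom hom_arr by blast
lemma ide_r [simp]: "f \<in> Arr C \<Longrightarrow> src C f = x \<Longrightarrow> M f (ide C x) = f"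
  using cmp_ide_r homI by blast
lemma ide_l [simp]: "f \<in> Arr C \<Longrightarrow> trg C f = x \<Longrightarrow> M (ide C x) f = f"
  using cmp_ide_l homI by blast

lemma i2_cellsA: "f \<in> Arr C \<Longrightarrow> I f \<in> cells C f f"
  using i2_cells homI by blast

lemma hc_cellsA: "\<alpha> \<in> cells C f f' \<Longrightarrow> \<beta> \<in> cells C g g' \<Longrightarrow> trg C f = src C g \<Longrightarrow>
   H \<beta> \<alpha> \<in> cells C (M g f) (M g' f')"
  by (metis hc_cells hom_iff cells_arr)

lemma wl_cellsA: "\<alpha> \<in> cells C f f' \<Longrightarrow> k \<in> Arr C \<Longrightarrow> trg C f = src C k \<Longrightarrow>
   H (I k) \<alpha> \<in> cells C (M k f) (M k f')"
  using hc_cellsA i2_cellsA by blast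

lemma wr_cellsA: "\<alpha> \<in> cells C f f' \<Longrightarrow> k \<in> Arr C \<Longrightarrow> trg C k = src C f \<Longrightarrow>
   H \<alpha> (I k) \<in> cells C (M f k) (M f' k)"
  using hc_cellsA i2_cellsA by blast

lemma hc_i2A: "f \<in> Arr C \<Longrightarrow> g \<in> Arr C \<Longrightarrow> trg C f = src C g \<Longrightarrow> H (I g) (I f) = I (M g f)"
  using hc_i2 homI by metis

lemma hc_unit_lA: "\<alpha> \<in> cells C f f' \<Longrightarrow> trg C f = y \<Longrightarrow> H (I (ide C y)) \<alpha> = \<alpha>"
  using hc_unit_l homI cells_arr by metis

lemma hc_unit_rA: "\<alpha> \<in> cells C f f' \<Longrightarrow> src C f = x \<Longrightarrow> H \<alpha> (I (ide C x)) = \<alpha>"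
  using hc_unit_r homI cells_arr by metis

lemma wl_vcA: "\<alpha> \<in> cells C f g \<Longrightarrow> \<beta> \<in> cells C g h \<Longrightarrow> k \<in> Arr C \<Longrightarrow> trg C f = src C k \<Longrightarrow>
   H (I k) (V \<beta> \<alpha>) = V (H (I k) \<beta>) (H (I k) \<alpha>)"
  using wl_vc homI cells_arr by metis

lemma wr_vcA: "\<alpha> \<in> cells C f g \<Longrightarrow> \<beta> \<in> cells C g h \<Longrightarrow> k \<in> Arr C \<Longrightarrow> trg C k = src C f \<Longrightarrow>
   H (V \<beta> \<alpha>) (I k) = V (H \<beta> (I k)) (H \<alpha> (I k))"
  using wr_vc homI cells_arr by metis

lemma wllA: "\<alpha> \<in> cells C a a' \<Longrightarrow> f \<in> Arr C \<Longrightarrow> g \<in> Arr C \<Longrightarrow> trg C a = src C f \<Longrightarrow> trg C f = src C g \<Longrightarrow>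
   H (I g) (H (I f) \<alpha>) = H (I (M g f)) \<alpha>"
  using wll homI cells_arr by metis

lemma wrrA: "\<alpha> \<in> cells C a a' \<Longrightarrow> f \<in> Arr C \<Longrightarrow> g \<in> Arr C \<Longrightarrow> trg C f = src C a \<Longrightarrow> trg C g = src C f \<Longrightarrow>
   H (H \<alpha> (I f)) (I g) = H \<alpha> (I (M f g))"
  using wrr homI cells_arr by metis

lemma wlrA: "\<alpha> \<in> cells C a a' \<Longrightarrow> f \<in> Arr C \<Longrightarrow> g \<in> Arr C \<Longrightarrow> trg C f = src C a \<Longrightarrow> trg C a = src C g \<Longrightarrow>
   H (H (I g) \<alpha>) (I f) = H (I g) (H \<alpha> (I f))"
  using wlr homI cells_arr by metis

lemma hc_decomp1A: "\<alpha> \<in> cells C f f' \<Longrightarrow> \<beta> \<in> cells C g g' \<Longrightarrow> trg C f = src C g \<Longrightarrow>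
   H \<beta> \<alpha> = V (H \<beta> (I f')) (H (I g) \<alpha>)"
  using hc_decomp1 homI cells_arr by metis

lemma hc_decomp2A: "\<alpha> \<in> cells C f f' \<Longrightarrow> \<beta> \<in> cells C g g' \<Longrightarrow> trg C f = src C g \<Longrightarrow>
   H \<beta> \<alpha> = V (H (I g') \<alpha>) (H \<beta> (I f))"
  using hc_decomp2 homI cells_arr by metis

lemma cells_cong: "\<theta> \<in> cells C f g \<Longrightarrow> f = f' \<Longrightarrow> g = g' \<Longrightarrow> \<theta> \<in> cells C f' g'"
  by simp

end

locale main = tc C for C :: "('o,'a,'c) tcat" +
  fixes p :: 'a and e b P :: 'o and d0 d1 :: 'a and \<alpha> :: 'c and P3 :: 'o and D0 D2 t :: 'a
    and \<gamma> \<sigma> :: 'c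
  assumes p: "p \<in> hom C e b"
  and oc: "opcomma C p P d0 d1 \<alpha>"
  and po: "pushout2 C d0 d1 P3 D2 D0"
  and rn: "ran C p p t \<gamma>"
  and \<sigma>: "\<sigma> \<in> cells C d1 (M d0 t)"
  and \<sigma>_eq: "V (H (I d0) \<gamma>) (H \<sigma> (I p)) = \<alpha>"
begin

lemma trgp: "trg C p = b" "src C p = e" using p hom_arr by auto
lemma b_obj: "b \<in> Obj C" "e \<in> Obj C" using hom_obj[OF p] by auto
lemma P_obj: "P \<in> Obj C" using oc unfolding opcomma_def by blast
lemma d0: "d0 \<in> hom C b P" using oc trgp unfolding opcomma_def by blast
lemma d1: "d1 \<in> hom C b P" using oc trgp unfolding opcomma_def by blast
lemma \<alpha>: "\<alpha> \<in> cells C (M d1 p) (M d0 p)" using oc unfolding opcomma_def by blast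
lemma P3_obj: "P3 \<in> Obj C" using po unfolding pushout2_def by blast
lemma D2: "D2 \<in> hom C P P3" using po d0 hom_arr unfolding pushout2_def by metis
lemma D0: "D0 \<in> hom C P P3" using po d1 hom_arr unfolding pushout2_def by metis
lemma D20: "M D2 d0 = M D0 d1" using po unfolding pushout2_def by blast
lemma t: "t \<in> hom C b b" using rn trgp unfolding ran_def by blast
lemma \<gamma>: "\<gamma> \<in> cells C (M t p) p" using rn unfolding ran_def by blast

lemma oc_ex: "y \<in> Obj C \<Longrightarrow> h0 \<in> hom C b y \<Longrightarrow> h1 \<in> hom C b y \<Longrightarrow> \<beta> \<in> cells C (M h1 p) (M h0 p) \<Longrightarrow>
   \<exists>h \<in> hom C P y. M h d0 = h0 \<and> M h d1 = h1 \<and> H (I h) \<alpha> = \<beta>"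
proof -
  assume a: "y \<in> Obj C" "h0 \<in> hom C b y" "h1 \<in> hom C b y" "\<beta> \<in> cells C (M h1 p) (M h0 p)"
  have "bij_betw (\<lambda>h. (M h d0, M h d1, H (I h) \<alpha>)) (hom C P y)
          {(h0, h1, \<beta>). h0 \<in> hom C b y \<and> h1 \<in> hom C b y \<and>
                       \<beta> \<in> cells C (M h1 p) (M h0 p)}"
    using oc a(1) trgp unfolding opcomma_def by auto
  hence "(h0, h1, \<beta>) \<in> (\<lambda>h. (M h d0, M h d1, H (I h) \<alpha>)) ` hom C P y"
    using a unfolding bij_betw_def by auto
  thus ?thesis by force
qed

lemma oc_uniq: "h \<in> hom C P y \<Longrightarrow> h' \<in> hom C P y \<Longrightarrow> M h d0 = M h' d0 \<Longrightarrow> M h d1 = M h' d1 \<Longrightarrow>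
   H (I h) \<alpha> = H (I h') \<alpha> \<Longrightarrow> h = h'"
proof -
  assume a: "h \<in> hom C P y" "h' \<in> hom C P y" "M h d0 = M h' d0" "M h d1 = M h' d1" "H (I h) \<alpha> = H (I h') \<alpha>"
  have y: "y \<in> Obj C" using hom_obj a(1) by blast
  have "bij_betw (\<lambda>h. (M h d0, M h d1, H (I h) \<alpha>)) (hom C P y)
          {(h0, h1, \<beta>). h0 \<in> hom C b y \<and> h1 \<in> hom C b y \<and>
                       \<beta> \<in> cells C (M h1 p) (M h0 p)}"
    using oc y trgp unfolding opcomma_def by auto
  hence "inj_on (\<lambda>h. (M h d0, M h d1, H (I h) \<alpha>)) (hom C P y)" unfolding bij_betw_def by blast
  thus ?thesis using a by (auto dest: inj_onD)
qed

lemma oc_cell_ex: "h \<in> hom C P y \<Longrightarrow> h' \<in> hom C P y \<Longrightarrow> \<xi>0 \<in> cells C (M h d0) (M h' d0) \<Longrightarrow>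
   \<xi>1 \<in> cells C (M h d1) (M h' d1) \<Longrightarrow>
   V (H \<xi>0 (I p)) (H (I h) \<alpha>) = V (H (I h') \<alpha>) (H \<xi>1 (I p)) \<Longrightarrow>
   \<exists>\<xi> \<in> cells C h h'. H \<xi> (I d0) = \<xi>0 \<and> H \<xi> (I d1) = \<xi>1"
proof -
  assume a: "h \<in> hom C P y" "h' \<in> hom C P y" "\<xi>0 \<in> cells C (M h d0) (M h' d0)"
   "\<xi>1 \<in> cells C (M h d1) (M h' d1)" "V (H \<xi>0 (I p)) (H (I h) \<alpha>) = V (H (I h') \<alpha>) (H \<xi>1 (I p))"
  have y: "y \<in> Obj C" using hom_obj a(1) by blast
  have "bij_betw (\<lambda>\<xi>. (H \<xi> (I d0), H \<xi> (I d1))) (cells C h h')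
            {(\<xi>0, \<xi>1). \<xi>0 \<in> cells C (M h d0) (M h' d0) \<and>
                       \<xi>1 \<in> cells C (M h d1) (M h' d1) \<and>
                       V (H \<xi>0 (I p)) (H (I h) \<alpha>) = V (H (I h') \<alpha>) (H \<xi>1 (I p))}"
    using oc y a(1,2) unfolding opcomma_def by blast
  hence "(\<xi>0, \<xi>1) \<in> (\<lambda>\<xi>. (H \<xi> (I d0), H \<xi> (I d1))) ` cells C h h'"
    using a unfolding bij_betw_def by auto
  thus ?thesis by force
qed

lemma po_ex: "y \<in> Obj C \<Longrightarrow> k0 \<in> hom C P y \<Longrightarrow> k1 \<in> hom C P y \<Longrightarrow> M k0 d0 = M k1 d1 \<Longrightarrow>
   \<exists>k \<in> hom C P3 y. M k D2 = k0 \<and> M k D0 = k1"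
proof -
  assume a: "y \<in> Obj C" "k0 \<in> hom C P y" "k1 \<in> hom C P y" "M k0 d0 = M k1 d1"
  have tt: "trg C d0 = P" "trg C d1 = P" using d0 d1 hom_arr by auto
  have "bij_betw (\<lambda>k. (M k D2, M k D0)) (hom C P3 y)
          {(k0, k1). k0 \<in> hom C P y \<and> k1 \<in> hom C P y \<and> M k0 d0 = M k1 d1}"
    using po a(1) tt unfolding pushout2_def by auto
  hence "(k0, k1) \<in> (\<lambda>k. (M k D2, M k D0)) ` hom C P3 y"
    using a unfolding bij_betw_def by auto
  thus ?thesis by force
qed

lemma po_cell_ex: "k \<in> hom C P3 y \<Longrightarrow> k' \<in> hom C P3 y \<Longrightarrow> \<xi>0 \<in> cells C (M k D2) (M k' D2) \<Longrightarrow>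
   \<xi>1 \<in> cells C (M k D0) (M k' D0) \<Longrightarrow> H \<xi>0 (I d0) = H \<xi>1 (I d1) \<Longrightarrow>
   \<exists>\<xi> \<in> cells C k k'. H \<xi> (I D2) = \<xi>0 \<and> H \<xi> (I D0) = \<xi>1"
proof -
  assume a: "k \<in> hom C P3 y" "k' \<in> hom C P3 y" "\<xi>0 \<in> cells C (M k D2) (M k' D2)"
   "\<xi>1 \<in> cells C (M k D0) (M k' D0)" "H \<xi>0 (I d0) = H \<xi>1 (I d1)"
  have y: "y \<in> Obj C" using hom_obj a(1) by blast
  have "bij_betw (\<lambda>\<xi>. (H \<xi> (I D2), H \<xi> (I D0))) (cells C k k')
            {(\<xi>0, \<xi>1). \<xi>0 \<in> cells C (M k D2) (M k' D2) \<and>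
                       \<xi>1 \<in> cells C (M k D0) (M k' D0) \<and>
                       H \<xi>0 (I d0) = H \<xi>1 (I d1)}"
    using po y a(1,2) unfolding pushout2_def by blast
  hence "(\<xi>0, \<xi>1) \<in> (\<lambda>\<xi>. (H \<xi> (I D2), H \<xi> (I D0))) ` cells C k k'"
    using a unfolding bij_betw_def by auto
  thus ?thesis by force
qed

lemma ran_ex: "k \<in> hom C b b \<Longrightarrow> \<phi> \<in> cells C (M k p) p \<Longrightarrow> \<exists>\<beta> \<in> cells C k t. V \<gamma> (H \<beta> (I p)) = \<phi>"
proof -
  assume a: "k \<in> hom C b b" "\<phi> \<in> cells C (M k p) p"
  have "bij_betw (\<lambda>\<beta>. V \<gamma> (H \<beta> (I p))) (cells C k t) (cells C (M k p) p)"
    using rn a trgp unfolding ran_def by auto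
  thus ?thesis using a unfolding bij_betw_def by force
qed

lemma ran_inj: "k \<in> hom C b b \<Longrightarrow> \<beta> \<in> cells C k t \<Longrightarrow> \<beta>' \<in> cells C k t \<Longrightarrow>
   V \<gamma> (H \<beta> (I p)) = V \<gamma> (H \<beta>' (I p)) \<Longrightarrow> \<beta> = \<beta>'"
proof -
  assume a: "k \<in> hom C b b" "\<beta> \<in> cells C k t" "\<beta>' \<in> cells C k t" "V \<gamma> (H \<beta> (I p)) = V \<gamma> (H \<beta>' (I p))"
  have "bij_betw (\<lambda>\<beta>. V \<gamma> (H \<beta> (I p))) (cells C k t) (cells C (M k p) p)"
    using rn a trgp unfolding ran_def by auto
  thus ?thesis using a unfolding bij_betw_def by (auto dest: inj_onD)
qed


lemma atoms [simp]:
  "p \<in> Arr C" "src C p = e" "trg C p = b"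
  "d0 \<in> Arr C" "src C d0 = b" "trg C d0 = P"
  "d1 \<in> Arr C" "src C d1 = b" "trg C d1 = P"
  "D0 \<in> Arr C" "src C D0 = P" "trg C D0 = P3"
  "D2 \<in> Arr C" "src C D2 = P" "trg C D2 = P3"
  "t \<in> Arr C" "src C t = b" "trg C t = b"
  "b \<in> Obj C" "e \<in> Obj C" "P \<in> Obj C" "P3 \<in> Obj C"
  using p d0 d1 D0 D2 t b_obj P_obj P3_obj by (auto simp: hom_iff)

lemma D20' [simp]: "f \<in> Arr C \<Longrightarrow> trg C f = b \<Longrightarrow> M D2 (M d0 f) = M D0 (M d1 f)"
  using D20 by (metis assoc_r atoms)

definition r where "r = (SOME h. h \<in> hom C P b \<and> M h d0 = ide C b \<and> M h d1 = t \<and> H (I h) \<alpha> = \<gamma>)"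

lemma r_ex: "\<exists>h. h \<in> hom C P b \<and> M h d0 = ide C b \<and> M h d1 = t \<and> H (I h) \<alpha> = \<gamma>"
proof -
  have "\<gamma> \<in> cells C (M t p) (M (ide C b) p)" using \<gamma> by simp
  from oc_ex[OF _ _ t this] show ?thesis by (auto simp: hom_iff)
qed

lemma r: "r \<in> hom C P b" "M r d0 = ide C b" "M r d1 = t" "H (I r) \<alpha> = \<gamma>"
  using someI_ex[OF r_ex] unfolding r_def[symmetric] by auto

lemma r_atoms [simp]: "r \<in> Arr C" "src C r = P" "trg C r = b"
  using r(1) by (auto simp: hom_iff)

lemma r_d [simp]: "f \<in> Arr C \<Longrightarrow> trg C f = b \<Longrightarrow> M r (M d0 f) = f"
    "f \<in> Arr C \<Longrightarrow> trg C f = b \<Longrightarrow> M r (M d1 f) = M t f"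
  using r(2,3) by (metis assoc_r atoms r_atoms ide_l)+

lemma s0_ex1: "\<exists>!h. h \<in> hom C P (trg C p) \<and> M h d0 = ide C (trg C p) \<and> M h d1 = ide C (trg C p) \<and>
      H (I h) \<alpha> = I p"
proof -
  have "I p \<in> cells C (M (ide C b) p) (M (ide C b) p)" using i2_cellsA by simp
  from oc_ex[OF _ ide_hom ide_hom this] obtain h where
    "h \<in> hom C P b \<and> M h d0 = ide C b \<and> M h d1 = ide C b \<and> H (I h) \<alpha> = I p" by auto
  thus ?thesis using oc_uniq by (auto simp: trgp)
qed

abbreviation "s0 \<equiv> cokS0 C p P d0 d1 \<alpha>"

lemma s0: "s0 \<in> hom C P b" "M s0 d0 = ide C b" "M s0 d1 = ide C b" "H (I s0) \<alpha> = I p"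
  using theI'[OF s0_ex1] unfolding cokS0_def[symmetric] by (auto simp: trgp)

lemma s0_atoms [simp]: "s0 \<in> Arr C" "src C s0 = P" "trg C s0 = b"
  using s0(1) by (auto simp: hom_iff)

lemma s0_d [simp]: "f \<in> Arr C \<Longrightarrow> trg C f = b \<Longrightarrow> M s0 (M d0 f) = f"
    "f \<in> Arr C \<Longrightarrow> trg C f = b \<Longrightarrow> M s0 (M d1 f) = f"
  using s0(2,3) by (metis assoc_r atoms s0_atoms ide_l)+

lemma D1_ex1: "\<exists>!h. h \<in> hom C P P3 \<and> M h d1 = M D2 d1 \<and> M h d0 = M D0 d0 \<and>
      H (I h) \<alpha> = V (H (I D0) \<alpha>) (H (I D2) \<alpha>)"
proof -
  have c2: "H (I D2) \<alpha> \<in> cells C (M D2 (M d1 p)) (M D0 (M d1 p))"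
    using wl_cellsA[OF \<alpha>, of D2] by simp
  have c0: "H (I D0) \<alpha> \<in> cells C (M D0 (M d1 p)) (M D0 (M d0 p))"
    using wl_cellsA[OF \<alpha>, of D0] by simp
  have "V (H (I D0) \<alpha>) (H (I D2) \<alpha>) \<in> cells C (M (M D2 d1) p) (M (M D0 d0) p)"
    using vc_cells[OF c2 c0] by simp
  from oc_ex[of P3 "M D0 d0" "M D2 d1", OF _ _ _ this] obtain h where
    "h \<in> hom C P P3 \<and> M h d0 = M D0 d0 \<and> M h d1 = M D2 d1 \<and> H (I h) \<alpha> = V (H (I D0) \<alpha>) (H (I D2) \<alpha>)"
    by (auto simp: hom_iff)
  thus ?thesis using oc_uniq by auto
qed

abbreviation "D1 \<equiv> cokD1 C p P d0 d1 \<alpha> P3 D0 D2"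

lemma D1: "D1 \<in> hom C P P3" "M D1 d1 = M D2 d1" "M D1 d0 = M D0 d0"
   "H (I D1) \<alpha> = V (H (I D0) \<alpha>) (H (I D2) \<alpha>)"
  unfolding cokD1_def using theI'[OF D1_ex1] by auto

lemma D1_atoms [simp]: "D1 \<in> Arr C" "src C D1 = P" "trg C D1 = P3"
  using D1(1) by (auto simp: hom_iff)

lemma D1_d [simp]: "f \<in> Arr C \<Longrightarrow> trg C f = b \<Longrightarrow> M D1 (M d0 f) = M D0 (M d0 f)"
    "f \<in> Arr C \<Longrightarrow> trg C f = b \<Longrightarrow> M D1 (M d1 f) = M D2 (M d1 f)"
  using D1(2,3) by (metis assoc_r atoms D1_atoms)+

definition R where "R = (SOME k. k \<in> hom C P3 b \<and> M k D2 = M t r \<and> M k D0 = r)"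

lemma R_ex: "\<exists>k. k \<in> hom C P3 b \<and> M k D2 = M t r \<and> M k D0 = r"
proof -
  have "M (M t r) d0 = M r d1" using r by simp
  from po_ex[OF _ _ r(1) this] show ?thesis by (auto simp: hom_iff)
qed

lemma R: "R \<in> hom C P3 b" "M R D2 = M t r" "M R D0 = r"
  using someI_ex[OF R_ex] unfolding R_def[symmetric] by auto

lemma R_atoms [simp]: "R \<in> Arr C" "src C R = P3" "trg C R = b"
  using R(1) by (auto simp: hom_iff)

lemma R_D [simp]: "f \<in> Arr C \<Longrightarrow> trg C f = P \<Longrightarrow> M R (M D2 f) = M t (M r f)"
    "f \<in> Arr C \<Longrightarrow> trg C f = P \<Longrightarrow> M R (M D0 f) = M r f"
  using R(2,3) by (metis assoc_r atoms R_atoms r_atoms)+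


declare r(2,3) [simp] s0(2,3) [simp] D1(2,3) [simp] R(2,3) [simp]

lemma \<sigma>p: "H \<sigma> (I p) \<in> cells C (M d1 p) (M d0 (M t p))"
  using wr_cellsA[OF \<sigma>, of p] by simp
lemma d0\<gamma>: "H (I d0) \<gamma> \<in> cells C (M d0 (M t p)) (M d0 p)"
  using wl_cellsA[OF \<gamma>, of d0] by simp

lemma k\<sigma>_cells: "k \<in> Arr C \<Longrightarrow> src C k = P \<Longrightarrow> M k d0 = ide C b \<Longrightarrow> H (I k) \<sigma> \<in> cells C (M k d1) t"
proof -
  assume k: "k \<in> Arr C" "src C k = P" "M k d0 = ide C b"
  have "H (I k) \<sigma> \<in> cells C (M k d1) (M k (M d0 t))" using wl_cellsA[OF \<sigma> k(1)] k by simp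
  moreover have "M k (M d0 t) = t" using k by (metis assoc_r atoms ide_l)
  ultimately show ?thesis by simp
qed

lemma k\<alpha>: "k \<in> Arr C \<Longrightarrow> src C k = P \<Longrightarrow> M k d0 = ide C b \<Longrightarrow> H (I k) \<alpha> = V \<gamma> (H (H (I k) \<sigma>) (I p))"
proof -
  assume k: "k \<in> Arr C" "src C k = P" "M k d0 = ide C b"
  have "H (I k) \<alpha> = H (I k) (V (H (I d0) \<gamma>) (H \<sigma> (I p)))" using \<sigma>_eq by simp
  also have "\<dots> = V (H (I k) (H (I d0) \<gamma>)) (H (I k) (H \<sigma> (I p)))"
    using wl_vcA[OF \<sigma>p d0\<gamma> k(1)] k by simp
  also have "H (I k) (H (I d0) \<gamma>) = H (I (M k d0)) \<gamma>" using wllA[OF \<gamma>, of d0 k] k by simp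
  also have "\<dots> = \<gamma>" using k hc_unit_lA[OF \<gamma>] by simp
  also have "H (I k) (H \<sigma> (I p)) = H (H (I k) \<sigma>) (I p)" using wlrA[OF \<sigma>, of p k] k by simp
  finally show ?thesis .
qed

lemma r\<sigma>: "H (I r) \<sigma> = I t"
proof (rule ran_inj[OF t k\<sigma>_cells[of r, simplified] i2_cellsA[OF atoms(16)]])
  show "V \<gamma> (H (H (I r) \<sigma>) (I p)) = V \<gamma> (H (I t) (I p))"
    using k\<alpha>[of r] r(4) hc_i2A[of p t] vc_idr[OF \<gamma>] by simp
qed

lemma \<eta>: "cod_unit C p t \<gamma> = H (I s0) \<sigma>"
proof -
  have c: "H (I s0) \<sigma> \<in> cells C (ide C b) t" using k\<sigma>_cells[of s0] by simp
  have eq: "V \<gamma> (H (H (I s0) \<sigma>) (I p)) = I p" using k\<alpha>[of s0] s0(4) by simp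
  have ex: "\<exists>!\<eta>. \<eta> \<in> cells C (ide C (trg C p)) t \<and> V \<gamma> (H \<eta> (I p)) = I p"
  proof (rule ex1I[of _ "H (I s0) \<sigma>"])
    show "H (I s0) \<sigma> \<in> cells C (ide C (trg C p)) t \<and> V \<gamma> (H (H (I s0) \<sigma>) (I p)) = I p"
      using c eq by simp
  next
    fix x assume "x \<in> cells C (ide C (trg C p)) t \<and> V \<gamma> (H x (I p)) = I p"
    thus "x = H (I s0) \<sigma>" using ran_inj[OF ide_hom[OF b_obj(1)] _ c] eq by simp
  qed
  show ?thesis unfolding cod_unit_def by (rule the1_equality[OF ex]) (use c eq in simp)
qed

lemma RD1 [simp]: "M R (M D1 d0) = ide C b" "M R (M D1 d1) = M t t"
  by simp_all

lemma RD1_\<alpha>: "H (I (M R D1)) \<alpha> = V \<gamma> (H (I t) \<gamma>)"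
proof -
  have c2: "H (I D2) \<alpha> \<in> cells C (M D2 (M d1 p)) (M D0 (M d1 p))"
    using wl_cellsA[OF \<alpha>, of D2] by simp
  have c0: "H (I D0) \<alpha> \<in> cells C (M D0 (M d1 p)) (M D0 (M d0 p))"
    using wl_cellsA[OF \<alpha>, of D0] by simp
  have "H (I (M R D1)) \<alpha> = H (I R) (H (I D1) \<alpha>)" using wllA[OF \<alpha>, of D1 R] by simp
  also have "\<dots> = H (I R) (V (H (I D0) \<alpha>) (H (I D2) \<alpha>))" using D1(4) by simp
  also have "\<dots> = V (H (I R) (H (I D0) \<alpha>)) (H (I R) (H (I D2) \<alpha>))"
    using wl_vcA[OF c2 c0, of R] by simp
  also have "H (I R) (H (I D0) \<alpha>) = \<gamma>" using wllA[OF \<alpha>, of D0 R] r(4) by simp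
  also have "H (I R) (H (I D2) \<alpha>) = H (I t) (H (I r) \<alpha>)"
    using wllA[OF \<alpha>, of D2 R] wllA[OF \<alpha>, of r t] by simp
  finally show ?thesis using r(4) by simp
qed

lemma \<mu>: "cod_mult C p t \<gamma> = H (I (M R D1)) \<sigma>"
proof -
  have c: "H (I (M R D1)) \<sigma> \<in> cells C (M t t) t" using k\<sigma>_cells[of "M R D1"] by simp
  have eq: "V \<gamma> (H (H (I (M R D1)) \<sigma>) (I p)) = V \<gamma> (H (I t) \<gamma>)" using k\<alpha>[of "M R D1"] RD1_\<alpha> by simp
  have tt: "M t t \<in> hom C b b" by (simp add: hom_iff)
  have ex: "\<exists>!m. m \<in> cells C (M t t) t \<and> V \<gamma> (H m (I p)) = V \<gamma> (H (I t) \<gamma>)"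
  proof (rule ex1I[of _ "H (I (M R D1)) \<sigma>"])
    show "H (I (M R D1)) \<sigma> \<in> cells C (M t t) t \<and> V \<gamma> (H (H (I (M R D1)) \<sigma>) (I p)) = V \<gamma> (H (I t) \<gamma>)"
      using c eq by simp
  next
    fix x assume "x \<in> cells C (M t t) t \<and> V \<gamma> (H x (I p)) = V \<gamma> (H (I t) \<gamma>)"
    thus "x = H (I (M R D1)) \<sigma>" using ran_inj[OF tt _ c] eq by simp
  qed
  show ?thesis unfolding cod_mult_def by (rule the1_equality[OF ex]) (use c eq in simp)
qed

definition \<iota> where "\<iota> = (SOME \<xi>. \<xi> \<in> cells C (ide C P) (M d0 r) \<and> H \<xi> (I d0) = I d0 \<and> H \<xi> (I d1) = \<sigma>)"

lemma \<iota>_ex: "\<exists>\<xi>. \<xi> \<in> cells C (ide C P) (M d0 r) \<and> H \<xi> (I d0) = I d0 \<and> H \<xi> (I d1) = \<sigma>"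
proof -
  have h: "ide C P \<in> hom C P P" "M d0 r \<in> hom C P P" by (simp_all add: hom_iff)
  have c0: "I d0 \<in> cells C (M (ide C P) d0) (M (M d0 r) d0)" using i2_cellsA[of d0] by simp
  have c1: "\<sigma> \<in> cells C (M (ide C P) d1) (M (M d0 r) d1)" using \<sigma> by simp
  have "V (H (I d0) (I p)) (H (I (ide C P)) \<alpha>) = \<alpha>"
    using hc_i2A[of p d0] hc_unit_lA[OF \<alpha>] vc_idl[OF \<alpha>] by simp
  moreover have "V (H (I (M d0 r)) \<alpha>) (H \<sigma> (I p)) = \<alpha>"
    using wllA[OF \<alpha>, of r d0] r(4) \<sigma>_eq by simp
  ultimately have "V (H (I d0) (I p)) (H (I (ide C P)) \<alpha>) = V (H (I (M d0 r)) \<alpha>) (H \<sigma> (I p))" by simp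
  from oc_cell_ex[OF h c0 c1 this] show ?thesis by auto
qed

lemma \<iota>: "\<iota> \<in> cells C (ide C P) (M d0 r)" "H \<iota> (I d0) = I d0" "H \<iota> (I d1) = \<sigma>"
  using someI_ex[OF \<iota>_ex] unfolding \<iota>_def[symmetric] by auto

lemma rep1: "h1 \<in> Arr C \<Longrightarrow> h0 \<in> Arr C \<Longrightarrow> trg C h1 = b \<Longrightarrow> trg C h0 = b \<Longrightarrow>
   \<phi> \<in> cells C (M d1 h1) (M d0 h0) \<Longrightarrow> \<phi> = V (H (I d0) (H (I r) \<phi>)) (H \<sigma> (I h1))"
proof -
  assume h: "h1 \<in> Arr C" "h0 \<in> Arr C" "trg C h1 = b" "trg C h0 = b" and \<phi>: "\<phi> \<in> cells C (M d1 h1) (M d0 h0)"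
  have e1: "H \<iota> \<phi> = V (H \<iota> (I (M d0 h0))) (H (I (ide C P)) \<phi>)"
    using hc_decomp1A[OF \<phi> \<iota>(1)] h by simp
  have e2: "H \<iota> \<phi> = V (H (I (M d0 r)) \<phi>) (H \<iota> (I (M d1 h1)))"
    using hc_decomp2A[OF \<phi> \<iota>(1)] h by simp
  have "H \<iota> (I (M d0 h0)) = H (H \<iota> (I d0)) (I h0)" using wrrA[OF \<iota>(1), of d0 h0] h by simp
  also have "\<dots> = I (M d0 h0)" using \<iota>(2) hc_i2A[of h0 d0] h by simp
  finally have a1: "H \<iota> (I (M d0 h0)) = I (M d0 h0)" .
  have a2: "H (I (ide C P)) \<phi> = \<phi>" using hc_unit_lA[OF \<phi>] h by simp
  have a3: "H (I (M d0 r)) \<phi> = H (I d0) (H (I r) \<phi>)" using wllA[OF \<phi>, of r d0] h by simp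
  have a4: "H \<iota> (I (M d1 h1)) = H \<sigma> (I h1)" using wrrA[OF \<iota>(1), of d1 h1] \<iota>(3) h by simp
  have "\<phi> = V (I (M d0 h0)) \<phi>" using vc_idl[OF \<phi>] by simp
  also have "\<dots> = H \<iota> \<phi>" using e1 a1 a2 by simp
  also have "\<dots> = V (H (I d0) (H (I r) \<phi>)) (H \<sigma> (I h1))" using e2 a3 a4 by simp
  finally show ?thesis .
qed

lemma rep1_inj: "h1 \<in> Arr C \<Longrightarrow> h0 \<in> Arr C \<Longrightarrow> trg C h1 = b \<Longrightarrow> trg C h0 = b \<Longrightarrow>
   \<phi> \<in> cells C (M d1 h1) (M d0 h0) \<Longrightarrow> \<phi>' \<in> cells C (M d1 h1) (M d0 h0) \<Longrightarrow>
   H (I r) \<phi> = H (I r) \<phi>' \<Longrightarrow> \<phi> = \<phi>'"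
  using rep1 by metis

declare D20 [simp]

definition \<iota>3 where "\<iota>3 = (SOME \<xi>. \<xi> \<in> cells C (ide C P3) (M D0 (M d0 R)) \<and> H \<xi> (I D2) = V (H (H (I D0) \<sigma>) (I r)) (H (I D2) \<iota>)
      \<and> H \<xi> (I D0) = H (I D0) \<iota>)"

lemma \<iota>3_ex: "\<exists>\<xi>. \<xi> \<in> cells C (ide C P3) (M D0 (M d0 R)) \<and> H \<xi> (I D2) = V (H (H (I D0) \<sigma>) (I r)) (H (I D2) \<iota>)
      \<and> H \<xi> (I D0) = H (I D0) \<iota>"
proof -
  have h: "ide C P3 \<in> hom C P3 P3" "M D0 (M d0 R) \<in> hom C P3 P3" by (simp_all add: hom_iff)
  have a1: "H (I D2) \<iota> \<in> cells C D2 (M D0 (M d1 r))" using wl_cellsA[OF \<iota>(1), of D2] by simp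
  have a2: "H (I D0) \<sigma> \<in> cells C (M D0 d1) (M D0 (M d0 t))" using wl_cellsA[OF \<sigma>, of D0] by simp
  have a3: "H (H (I D0) \<sigma>) (I r) \<in> cells C (M D0 (M d1 r)) (M D0 (M d0 (M t r)))"
    using wr_cellsA[OF a2, of r] by simp
  have c0: "V (H (H (I D0) \<sigma>) (I r)) (H (I D2) \<iota>) \<in> cells C (M (ide C P3) D2) (M (M D0 (M d0 R)) D2)"
    using vc_cells[OF a1 a3] by simp
  have c1: "H (I D0) \<iota> \<in> cells C (M (ide C P3) D0) (M (M D0 (M d0 R)) D0)"
    using wl_cellsA[OF \<iota>(1), of D0] by simp
  have "H (V (H (H (I D0) \<sigma>) (I r)) (H (I D2) \<iota>)) (I d0) =
        V (H (H (H (I D0) \<sigma>) (I r)) (I d0)) (H (H (I D2) \<iota>) (I d0))"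
    using wr_vcA[OF a1 a3, of d0] by simp
  also have "H (H (H (I D0) \<sigma>) (I r)) (I d0) = H (H (I D0) \<sigma>) (I (M r d0))"
    using wrrA[OF a2, of r d0] by simp
  also have "\<dots> = H (I D0) \<sigma>" using hc_unit_rA[OF a2] by simp
  also have "H (H (I D2) \<iota>) (I d0) = H (I D2) (H \<iota> (I d0))" using wlrA[OF \<iota>(1), of d0 D2] by simp
  also have "\<dots> = I (M D0 d1)" using \<iota>(2) hc_i2A[of d0 D2] by simp
  also have "V (H (I D0) \<sigma>) (I (M D0 d1)) = H (I D0) \<sigma>" using vc_idr[OF a2] .
  also have "H (I D0) \<sigma> = H (H (I D0) \<iota>) (I d1)" using wlrA[OF \<iota>(1), of d1 D0] \<iota>(3) by simp
  finally have "H (V (H (H (I D0) \<sigma>) (I r)) (H (I D2) \<iota>)) (I d0) = H (H (I D0) \<iota>) (I d1)" .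
  from po_cell_ex[OF h c0 c1 this] show ?thesis by auto
qed

lemma \<iota>3: "\<iota>3 \<in> cells C (ide C P3) (M D0 (M d0 R))" "H \<iota>3 (I D2) = V (H (H (I D0) \<sigma>) (I r)) (H (I D2) \<iota>)"
   "H \<iota>3 (I D0) = H (I D0) \<iota>"
  using someI_ex[OF \<iota>3_ex] unfolding \<iota>3_def[symmetric] by auto

lemma rep3: "h1 \<in> Arr C \<Longrightarrow> h0 \<in> Arr C \<Longrightarrow> trg C h1 = b \<Longrightarrow> trg C h0 = b \<Longrightarrow>
   \<phi> \<in> cells C (M D2 (M d1 h1)) (M D0 (M d0 h0)) \<Longrightarrow>
   \<phi> = V (H (I D0) (H (I d0) (H (I R) \<phi>))) (H \<iota>3 (I (M D2 (M d1 h1))))"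
proof -
  assume h: "h1 \<in> Arr C" "h0 \<in> Arr C" "trg C h1 = b" "trg C h0 = b" and \<phi>: "\<phi> \<in> cells C (M D2 (M d1 h1)) (M D0 (M d0 h0))"
  have e1: "H \<iota>3 \<phi> = V (H \<iota>3 (I (M D0 (M d0 h0)))) (H (I (ide C P3)) \<phi>)"
    using hc_decomp1A[OF \<phi> \<iota>3(1)] h by simp
  have e2: "H \<iota>3 \<phi> = V (H (I (M D0 (M d0 R))) \<phi>) (H \<iota>3 (I (M D2 (M d1 h1))))"
    using hc_decomp2A[OF \<phi> \<iota>3(1)] h by simp
  have "H \<iota>3 (I (M D0 (M d0 h0))) = H (H \<iota>3 (I D0)) (I (M d0 h0))"
    using wrrA[OF \<iota>3(1), of D0 "M d0 h0"] h by simp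
  also have "\<dots> = H (I D0) (H \<iota> (I (M d0 h0)))" using \<iota>3(3) wlrA[OF \<iota>(1), of "M d0 h0" D0] h by simp
  also have "H \<iota> (I (M d0 h0)) = H (H \<iota> (I d0)) (I h0)" using wrrA[OF \<iota>(1), of d0 h0] h by simp
  also have "\<dots> = I (M d0 h0)" using \<iota>(2) hc_i2A[of h0 d0] h by simp
  also have "H (I D0) (I (M d0 h0)) = I (M D0 (M d0 h0))" using hc_i2A[of "M d0 h0" D0] h by simp
  finally have a1: "H \<iota>3 (I (M D0 (M d0 h0))) = I (M D0 (M d0 h0))" .
  have a2: "H (I (ide C P3)) \<phi> = \<phi>" using hc_unit_lA[OF \<phi>] h by simp
  have "H (I (M D0 (M d0 R))) \<phi> = H (I D0) (H (I (M d0 R)) \<phi>)"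
    using wllA[OF \<phi>, of "M d0 R" D0] h by simp
  also have "H (I (M d0 R)) \<phi> = H (I d0) (H (I R) \<phi>)" using wllA[OF \<phi>, of R d0] h by simp
  finally have a3: "H (I (M D0 (M d0 R))) \<phi> = H (I D0) (H (I d0) (H (I R) \<phi>))" .
  have "\<phi> = V (I (M D0 (M d0 h0))) \<phi>" using vc_idl[OF \<phi>] by simp
  also have "\<dots> = H \<iota>3 \<phi>" using e1 a1 a2 by simp
  also have "\<dots> = V (H (I D0) (H (I d0) (H (I R) \<phi>))) (H \<iota>3 (I (M D2 (M d1 h1))))" using e2 a3 by simp
  finally show ?thesis .
qed

lemma rep3_inj: "h1 \<in> Arr C \<Longrightarrow> h0 \<in> Arr C \<Longrightarrow> trg C h1 = b \<Longrightarrow> trg C h0 = b \<Longrightarrow>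
   \<phi> \<in> cells C (M D2 (M d1 h1)) (M D0 (M d0 h0)) \<Longrightarrow> \<phi>' \<in> cells C (M D2 (M d1 h1)) (M D0 (M d0 h0)) \<Longrightarrow>
   H (I R) \<phi> = H (I R) \<phi>' \<Longrightarrow> \<phi> = \<phi>'"
  using rep3 by metis

definition G where "G h \<theta> = V (H (I d0) \<theta>) (H \<sigma> (I h))"

lemma G_cells: "h \<in> Arr C \<Longrightarrow> trg C h = b \<Longrightarrow> \<theta> \<in> cells C (M t h) h \<Longrightarrow> G h \<theta> \<in> cells C (M d1 h) (M d0 h)"
proof -
  assume h: "h \<in> Arr C" "trg C h = b" and \<theta>: "\<theta> \<in> cells C (M t h) h"
  have a1: "H \<sigma> (I h) \<in> cells C (M d1 h) (M d0 (M t h))" using wr_cellsA[OF \<sigma>, of h] h by simp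
  have a2: "H (I d0) \<theta> \<in> cells C (M d0 (M t h)) (M d0 h)" using wl_cellsA[OF \<theta>, of d0] h by simp
  show ?thesis unfolding G_def using vc_cells[OF a1 a2] .
qed

lemma F_cells: "h \<in> Arr C \<Longrightarrow> trg C h = b \<Longrightarrow> \<beta> \<in> cells C (M d1 h) (M d0 h) \<Longrightarrow> H (I r) \<beta> \<in> cells C (M t h) h"
  using wl_cellsA[of \<beta> "M d1 h" "M d0 h" r] by simp

lemma kG: "h \<in> Arr C \<Longrightarrow> trg C h = b \<Longrightarrow> \<theta> \<in> cells C (M t h) h \<Longrightarrow>
   k \<in> Arr C \<Longrightarrow> src C k = P \<Longrightarrow> M k d0 = ide C b \<Longrightarrow>
   H (I k) (G h \<theta>) = V \<theta> (H (H (I k) \<sigma>) (I h))"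
proof -
  assume h: "h \<in> Arr C" "trg C h = b" and \<theta>: "\<theta> \<in> cells C (M t h) h"
    and k: "k \<in> Arr C" "src C k = P" "M k d0 = ide C b"
  have a1: "H \<sigma> (I h) \<in> cells C (M d1 h) (M d0 (M t h))" using wr_cellsA[OF \<sigma>, of h] h by simp
  have a2: "H (I d0) \<theta> \<in> cells C (M d0 (M t h)) (M d0 h)" using wl_cellsA[OF \<theta>, of d0] h by simp
  have "H (I k) (G h \<theta>) = V (H (I k) (H (I d0) \<theta>)) (H (I k) (H \<sigma> (I h)))"
    unfolding G_def using wl_vcA[OF a1 a2, of k] k h by simp
  also have "H (I k) (H (I d0) \<theta>) = H (I (M k d0)) \<theta>" using wllA[OF \<theta>, of d0 k] h k by simp
  also have "\<dots> = \<theta>" using k hc_unit_lA[OF \<theta>] h by simp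
  also have "H (I k) (H \<sigma> (I h)) = H (H (I k) \<sigma>) (I h)" using wlrA[OF \<sigma>, of h k] h k by simp
  finally show ?thesis .
qed

lemma FG: "h \<in> Arr C \<Longrightarrow> trg C h = b \<Longrightarrow> \<theta> \<in> cells C (M t h) h \<Longrightarrow> H (I r) (G h \<theta>) = \<theta>"
proof -
  assume h: "h \<in> Arr C" "trg C h = b" and \<theta>: "\<theta> \<in> cells C (M t h) h"
  have "H (I r) (G h \<theta>) = V \<theta> (H (I t) (I h))" using kG[OF h \<theta>, of r] r\<sigma> by simp
  also have "\<dots> = \<theta>" using hc_i2A[of h t] h vc_idr[OF \<theta>] by simp
  finally show ?thesis .
qed

lemma GF: "h \<in> Arr C \<Longrightarrow> trg C h = b \<Longrightarrow> \<beta> \<in> cells C (M d1 h) (M d0 h) \<Longrightarrow> G h (H (I r) \<beta>) = \<beta>"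
  using rep1[of h h \<beta>] unfolding G_def by simp

lemma s0G: "h \<in> Arr C \<Longrightarrow> trg C h = b \<Longrightarrow> \<theta> \<in> cells C (M t h) h \<Longrightarrow>
   H (I s0) (G h \<theta>) = V \<theta> (H (cod_unit C p t \<gamma>) (I h))"
  using kG[of h \<theta> s0] \<eta> by simp

lemma RD1G: "h \<in> Arr C \<Longrightarrow> trg C h = b \<Longrightarrow> \<theta> \<in> cells C (M t h) h \<Longrightarrow>
   H (I (M R D1)) (G h \<theta>) = V \<theta> (H (cod_mult C p t \<gamma>) (I h))"
  using kG[of h \<theta> "M R D1"] \<mu> by simp

lemma norm_iff: "h \<in> Arr C \<Longrightarrow> trg C h = b \<Longrightarrow> \<beta> \<in> cells C (M d1 h) (M d0 h) \<Longrightarrow>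
   (H (I s0) \<beta> = I h) \<longleftrightarrow> (V (H (I r) \<beta>) (H (cod_unit C p t \<gamma>) (I h)) = I h)"
  using s0G[OF _ _ F_cells] GF by metis

lemma cocycle_iff: "h \<in> Arr C \<Longrightarrow> trg C h = b \<Longrightarrow> \<beta> \<in> cells C (M d1 h) (M d0 h) \<Longrightarrow>
   (V (H (I D0) \<beta>) (H (I D2) \<beta>) = H (I D1) \<beta>) \<longleftrightarrow>
   (V (H (I r) \<beta>) (H (I t) (H (I r) \<beta>)) = V (H (I r) \<beta>) (H (cod_mult C p t \<gamma>) (I h)))"
proof -
  assume h: "h \<in> Arr C" "trg C h = b" and \<beta>: "\<beta> \<in> cells C (M d1 h) (M d0 h)"
  have a2: "H (I D2) \<beta> \<in> cells C (M D2 (M d1 h)) (M D0 (M d1 h))" using wl_cellsA[OF \<beta>, of D2] h by simp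
  have a0: "H (I D0) \<beta> \<in> cells C (M D0 (M d1 h)) (M D0 (M d0 h))" using wl_cellsA[OF \<beta>, of D0] h by simp
  have L: "V (H (I D0) \<beta>) (H (I D2) \<beta>) \<in> cells C (M D2 (M d1 h)) (M D0 (M d0 h))"
    using vc_cells[OF a2 a0] .
  have Rc: "H (I D1) \<beta> \<in> cells C (M D2 (M d1 h)) (M D0 (M d0 h))" using wl_cellsA[OF \<beta>, of D1] h by simp
  have "H (I R) (V (H (I D0) \<beta>) (H (I D2) \<beta>)) = V (H (I R) (H (I D0) \<beta>)) (H (I R) (H (I D2) \<beta>))"
    using wl_vcA[OF a2 a0, of R] h by simp
  also have "H (I R) (H (I D0) \<beta>) = H (I r) \<beta>" using wllA[OF \<beta>, of D0 R] h by simp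
  also have "H (I R) (H (I D2) \<beta>) = H (I t) (H (I r) \<beta>)"
    using wllA[OF \<beta>, of D2 R] wllA[OF \<beta>, of r t] h by simp
  finally have e1: "H (I R) (V (H (I D0) \<beta>) (H (I D2) \<beta>)) = V (H (I r) \<beta>) (H (I t) (H (I r) \<beta>))" .
  have "H (I R) (H (I D1) \<beta>) = H (I (M R D1)) \<beta>" using wllA[OF \<beta>, of D1 R] h by simp
  also have "\<dots> = H (I (M R D1)) (G h (H (I r) \<beta>))" using GF[OF h \<beta>] by simp
  also have "\<dots> = V (H (I r) \<beta>) (H (cod_mult C p t \<gamma>) (I h))" using RD1G[OF h F_cells[OF h \<beta>]] .
  finally have e2: "H (I R) (H (I D1) \<beta>) = V (H (I r) \<beta>) (H (cod_mult C p t \<gamma>) (I h))" .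
  show ?thesis using rep3_inj[OF h(1) h(1) h(2) h(2) L Rc] e1 e2 by metis
qed

lemma mor_iff: "h1 \<in> Arr C \<Longrightarrow> trg C h1 = b \<Longrightarrow> h0 \<in> Arr C \<Longrightarrow> trg C h0 = b \<Longrightarrow>
   \<beta>1 \<in> cells C (M d1 h1) (M d0 h1) \<Longrightarrow> \<beta>0 \<in> cells C (M d1 h0) (M d0 h0) \<Longrightarrow> \<xi> \<in> cells C h1 h0 \<Longrightarrow>
   (V \<beta>0 (H (I d1) \<xi>) = V (H (I d0) \<xi>) \<beta>1) \<longleftrightarrow>
   (V \<xi> (H (I r) \<beta>1) = V (H (I r) \<beta>0) (H (I t) \<xi>))"
proof -
  assume h: "h1 \<in> Arr C" "trg C h1 = b" "h0 \<in> Arr C" "trg C h0 = b"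
    and \<beta>: "\<beta>1 \<in> cells C (M d1 h1) (M d0 h1)" "\<beta>0 \<in> cells C (M d1 h0) (M d0 h0)" and \<xi>: "\<xi> \<in> cells C h1 h0"
  have x1: "H (I d1) \<xi> \<in> cells C (M d1 h1) (M d1 h0)" using wl_cellsA[OF \<xi>, of d1] h by simp
  have x0: "H (I d0) \<xi> \<in> cells C (M d0 h1) (M d0 h0)" using wl_cellsA[OF \<xi>, of d0] h by simp
  have L: "V \<beta>0 (H (I d1) \<xi>) \<in> cells C (M d1 h1) (M d0 h0)" using vc_cells[OF x1 \<beta>(2)] .
  have Rc: "V (H (I d0) \<xi>) \<beta>1 \<in> cells C (M d1 h1) (M d0 h0)" using vc_cells[OF \<beta>(1) x0] .
  have "H (I r) (V \<beta>0 (H (I d1) \<xi>)) = V (H (I r) \<beta>0) (H (I r) (H (I d1) \<xi>))"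
    using wl_vcA[OF x1 \<beta>(2), of r] h by simp
  also have "H (I r) (H (I d1) \<xi>) = H (I t) \<xi>" using wllA[OF \<xi>, of d1 r] h by simp
  finally have e1: "H (I r) (V \<beta>0 (H (I d1) \<xi>)) = V (H (I r) \<beta>0) (H (I t) \<xi>)" .
  have "H (I r) (V (H (I d0) \<xi>) \<beta>1) = V (H (I r) (H (I d0) \<xi>)) (H (I r) \<beta>1)"
    using wl_vcA[OF \<beta>(1) x0, of r] h by simp
  also have "H (I r) (H (I d0) \<xi>) = \<xi>" using wllA[OF \<xi>, of d0 r] hc_unit_lA[OF \<xi>] h by simp
  finally have e2: "H (I r) (V (H (I d0) \<xi>) \<beta>1) = V \<xi> (H (I r) \<beta>1)" .
  have "src C h1 = src C h0" using cells_arr[OF \<xi>] by simp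
  thus ?thesis using rep1_inj[OF h(1) h(3) h(2) h(4) L Rc] e1 e2 by metis
qed

definition algs where
  "algs y = {(h, \<beta>). h \<in> hom C y (trg C p) \<and> \<beta> \<in> cells C (M t h) h \<and>
             V \<beta> (H (I t) \<beta>) = V \<beta> (H (cod_mult C p t \<gamma>) (I h)) \<and>
             V \<beta> (H (cod_unit C p t \<gamma>) (I h)) = I h}"

lemma F_mem: "(h, \<beta>) \<in> desc_obj C p P d0 d1 \<alpha> P3 D0 D2 y \<Longrightarrow> (h, H (I r) \<beta>) \<in> algs y"
proof -
  assume hb: "(h, \<beta>) \<in> desc_obj C p P d0 d1 \<alpha> P3 D0 D2 y"
  from hb have h: "h \<in> Arr C" "trg C h = b" "src C h = y" and \<beta>: "\<beta> \<in> cells C (M d1 h) (M d0 h)"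
    and c: "V (H (I D0) \<beta>) (H (I D2) \<beta>) = H (I D1) \<beta>" and n: "H (I s0) \<beta> = I h"
    unfolding desc_obj_def by (auto simp: hom_iff)
  have "H (I r) \<beta> \<in> cells C (M t h) h" using F_cells[OF h(1,2) \<beta>] .
  moreover have "V (H (I r) \<beta>) (H (I t) (H (I r) \<beta>)) = V (H (I r) \<beta>) (H (cod_mult C p t \<gamma>) (I h))"
    using cocycle_iff[OF h(1,2) \<beta>] c by blast
  moreover have "V (H (I r) \<beta>) (H (cod_unit C p t \<gamma>) (I h)) = I h"
    using norm_iff[OF h(1,2) \<beta>] n by blast
  moreover have "h \<in> hom C y (trg C p)" using h by (simp add: hom_iff)
  ultimately show ?thesis unfolding algs_def by blast
qed

lemma G_mem: "(h, \<theta>) \<in> algs y \<Longrightarrow> (h, G h \<theta>) \<in> desc_obj C p P d0 d1 \<alpha> P3 D0 D2 y"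
proof -
  assume hb: "(h, \<theta>) \<in> algs y"
  from hb have h: "h \<in> Arr C" "trg C h = b" "src C h = y" and \<theta>: "\<theta> \<in> cells C (M t h) h"
    and c: "V \<theta> (H (I t) \<theta>) = V \<theta> (H (cod_mult C p t \<gamma>) (I h))" and n: "V \<theta> (H (cod_unit C p t \<gamma>) (I h)) = I h"
    unfolding algs_def by (auto simp: hom_iff)
  have \<beta>: "G h \<theta> \<in> cells C (M d1 h) (M d0 h)" using G_cells[OF h(1,2) \<theta>] .
  have f: "H (I r) (G h \<theta>) = \<theta>" using FG[OF h(1,2) \<theta>] .
  have "V (H (I D0) (G h \<theta>)) (H (I D2) (G h \<theta>)) = H (I D1) (G h \<theta>)"
    using cocycle_iff[OF h(1,2) \<beta>] c unfolding f by blast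
  moreover have "H (I s0) (G h \<theta>) = I h"
    using norm_iff[OF h(1,2) \<beta>] n unfolding f by blast
  moreover have "h \<in> hom C y (trg C p)" using h by (simp add: hom_iff)
  ultimately show ?thesis using \<beta> unfolding desc_obj_def by blast
qed

lemma desc_algs: "bij_betw (\<lambda>(h, \<beta>). (h, H (I r) \<beta>)) (desc_obj C p P d0 d1 \<alpha> P3 D0 D2 y) (algs y)"
proof (rule bij_betw_byWitness[where f' = "\<lambda>(h, \<theta>). (h, G h \<theta>)"])
  show "\<forall>a\<in>desc_obj C p P d0 d1 \<alpha> P3 D0 D2 y. (\<lambda>(h, \<theta>). (h, G h \<theta>)) ((\<lambda>(h, \<beta>). (h, H (I r) \<beta>)) a) = a"
    unfolding desc_obj_def using GF by (auto simp: hom_iff)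
  show "\<forall>a'\<in>algs y. (\<lambda>(h, \<beta>). (h, H (I r) \<beta>)) ((\<lambda>(h, \<theta>). (h, G h \<theta>)) a') = a'"
    unfolding algs_def using FG by (auto simp: hom_iff)
  show "(\<lambda>(h, \<beta>). (h, H (I r) \<beta>)) ` desc_obj C p P d0 d1 \<alpha> P3 D0 D2 y \<subseteq> algs y"
    using F_mem by auto
  show "(\<lambda>(h, \<theta>). (h, G h \<theta>)) ` algs y \<subseteq> desc_obj C p P d0 d1 \<alpha> P3 D0 D2 y"
    using G_mem by auto
qed

lemma algs_desc: "bij_betw (\<lambda>(h, \<theta>). (h, G h \<theta>)) (algs y) (desc_obj C p P d0 d1 \<alpha> P3 D0 D2 y)"
proof (rule bij_betw_byWitness[where f' = "\<lambda>(h, \<beta>). (h, H (I r) \<beta>)"])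
  show "\<forall>a\<in>desc_obj C p P d0 d1 \<alpha> P3 D0 D2 y. (\<lambda>(h, \<theta>). (h, G h \<theta>)) ((\<lambda>(h, \<beta>). (h, H (I r) \<beta>)) a) = a"
    unfolding desc_obj_def using GF by (auto simp: hom_iff)
  show "\<forall>a'\<in>algs y. (\<lambda>(h, \<beta>). (h, H (I r) \<beta>)) ((\<lambda>(h, \<theta>). (h, G h \<theta>)) a') = a'"
    unfolding algs_def using FG by (auto simp: hom_iff)
  show "(\<lambda>(h, \<beta>). (h, H (I r) \<beta>)) ` desc_obj C p P d0 d1 \<alpha> P3 D0 D2 y \<subseteq> algs y"
    using F_mem by auto
  show "(\<lambda>(h, \<theta>). (h, G h \<theta>)) ` algs y \<subseteq> desc_obj C p P d0 d1 \<alpha> P3 D0 D2 y"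
    using G_mem by auto
qed

lemma \<Psi>g: "\<Psi> \<in> cells C (M d1 d) (M d0 d) \<Longrightarrow> d \<in> Arr C \<Longrightarrow> trg C d = b \<Longrightarrow> g \<in> Arr C \<Longrightarrow> trg C g = src C d \<Longrightarrow>
   H \<Psi> (I g) \<in> cells C (M d1 (M d g)) (M d0 (M d g)) \<and> H (I r) (H \<Psi> (I g)) = H (H (I r) \<Psi>) (I g)"
proof -
  assume a: "\<Psi> \<in> cells C (M d1 d) (M d0 d)" "d \<in> Arr C" "trg C d = b" "g \<in> Arr C" "trg C g = src C d"
  show ?thesis using wr_cellsA[OF a(1), of g] wlrA[OF a(1), of g r] a by simp
qed

lemma mor_set: "\<Psi> \<in> cells C (M d1 d) (M d0 d) \<Longrightarrow> d \<in> Arr C \<Longrightarrow> trg C d = b \<Longrightarrow>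
   g \<in> Arr C \<Longrightarrow> trg C g = src C d \<Longrightarrow> g' \<in> Arr C \<Longrightarrow> trg C g' = src C d \<Longrightarrow>
   desc_mor C d0 d1 (M d g) (H \<Psi> (I g)) (M d g') (H \<Psi> (I g')) =
   {\<xi> \<in> cells C (M d g) (M d g'). V \<xi> (H (H (I r) \<Psi>) (I g)) = V (H (H (I r) \<Psi>) (I g')) (H (I t) \<xi>)}"
proof -
  assume a: "\<Psi> \<in> cells C (M d1 d) (M d0 d)" "d \<in> Arr C" "trg C d = b"
    "g \<in> Arr C" "trg C g = src C d" "g' \<in> Arr C" "trg C g' = src C d"
  note x = \<Psi>g[OF a(1-3) a(4,5)] and x' = \<Psi>g[OF a(1-3) a(6,7)]
  have h: "M d g \<in> Arr C" "trg C (M d g) = b" "M d g' \<in> Arr C" "trg C (M d g') = b" using a by simp_all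
  show ?thesis unfolding desc_mor_def
    using mor_iff[OF h(1,2) h(3,4) conjunct1[OF x] conjunct1[OF x']] x x' by auto
qed

lemma lax_D:
  assumes "lax_descent C p P d0 d1 \<alpha> P3 D0 D2 L d \<Psi>" "y \<in> Obj C"
  shows "bij_betw (\<lambda>g. (M d g, H \<Psi> (I g))) (hom C y L) (desc_obj C p P d0 d1 \<alpha> P3 D0 D2 y)"
    and "g \<in> hom C y L \<Longrightarrow> g' \<in> hom C y L \<Longrightarrow> bij_betw (\<lambda>\<xi>. H (I d) \<xi>) (cells C g g')
            (desc_mor C d0 d1 (M d g) (H \<Psi> (I g)) (M d g') (H \<Psi> (I g')))"
proof -
  note x = bspec[OF assms(1)[unfolded lax_descent_def, THEN conjunct2, THEN conjunct2, THEN conjunct2] assms(2)]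
  show "bij_betw (\<lambda>g. (M d g, H \<Psi> (I g))) (hom C y L) (desc_obj C p P d0 d1 \<alpha> P3 D0 D2 y)"
    using x[THEN conjunct1] .
  show "g \<in> hom C y L \<Longrightarrow> g' \<in> hom C y L \<Longrightarrow> bij_betw (\<lambda>\<xi>. H (I d) \<xi>) (cells C g g')
            (desc_mor C d0 d1 (M d g) (H \<Psi> (I g)) (M d g') (H \<Psi> (I g')))"
    using x[THEN conjunct2] by blast
qed

lemma em_D:
  assumes "em_object C (trg C p) t (cod_mult C p t \<gamma>) (cod_unit C p t \<gamma>) B u \<mu>" "y \<in> Obj C"
  shows "bij_betw (\<lambda>g. (M u g, H \<mu> (I g))) (hom C y B) (algs y)"
    and "g \<in> hom C y B \<Longrightarrow> g' \<in> hom C y B \<Longrightarrow> bij_betw (\<lambda>\<xi>. H (I u) \<xi>) (cells C g g')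
            {\<xi> \<in> cells C (M u g) (M u g').
               V \<xi> (H \<mu> (I g)) = V (H \<mu> (I g')) (H (I t) \<xi>)}"
proof -
  note x = bspec[OF assms(1)[unfolded em_object_def, THEN conjunct2, THEN conjunct2, THEN conjunct2] assms(2)]
  show "bij_betw (\<lambda>g. (M u g, H \<mu> (I g))) (hom C y B) (algs y)"
    using x[THEN conjunct1] unfolding algs_def .
  show "g \<in> hom C y B \<Longrightarrow> g' \<in> hom C y B \<Longrightarrow> bij_betw (\<lambda>\<xi>. H (I u) \<xi>) (cells C g g')
            {\<xi> \<in> cells C (M u g) (M u g').
               V \<xi> (H \<mu> (I g)) = V (H \<mu> (I g')) (H (I t) \<xi>)}"
    using x[THEN conjunct2] by blast
qed

lemma lax_D0:
  assumes "lax_descent C p P d0 d1 \<alpha> P3 D0 D2 L d \<Psi>"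
  shows "L \<in> Obj C" "d \<in> hom C L (trg C p)" "\<Psi> \<in> cells C (M d1 d) (M d0 d)"
proof -
  note x = assms[unfolded lax_descent_def]
  show "L \<in> Obj C" using x[THEN conjunct1] .
  show "d \<in> hom C L (trg C p)" using x[THEN conjunct2, THEN conjunct1] .
  show "\<Psi> \<in> cells C (M d1 d) (M d0 d)" using x[THEN conjunct2, THEN conjunct2, THEN conjunct1] .
qed

lemma em_D0:
  assumes "em_object C (trg C p) t m' \<eta>' B u \<mu>"
  shows "B \<in> Obj C" "u \<in> hom C B (trg C p)" "\<mu> \<in> cells C (M t u) u"
proof -
  note x = assms[unfolded em_object_def]
  show "B \<in> Obj C" using x[THEN conjunct1] .
  show "u \<in> hom C B (trg C p)" using x[THEN conjunct2, THEN conjunct1] .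
  show "\<mu> \<in> cells C (M t u) u" using x[THEN conjunct2, THEN conjunct2, THEN conjunct1] .
qed

lemma lax_to_em:
  assumes lax: "lax_descent C p P d0 d1 \<alpha> P3 D0 D2 L d \<Psi>"
  shows "em_object C (trg C p) t (cod_mult C p t \<gamma>) (cod_unit C p t \<gamma>) L d (H (I r) \<Psi>)"
proof -
  have L: "L \<in> Obj C" and d: "d \<in> Arr C" "src C d = L" "trg C d = b" and \<Psi>: "\<Psi> \<in> cells C (M d1 d) (M d0 d)"
    using lax_D0[OF lax] by (auto simp: hom_iff)
  have A: "bij_betw (\<lambda>g. (M d g, H (H (I r) \<Psi>) (I g))) (hom C y L) (algs y)" if y: "y \<in> Obj C" for y
  proof -
    have "bij_betw (\<lambda>g. (M d g, H \<Psi> (I g))) (hom C y L) (desc_obj C p P d0 d1 \<alpha> P3 D0 D2 y)"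
      using lax_D(1)[OF lax y] .
    from bij_betw_trans[OF this desc_algs]
    have "bij_betw ((\<lambda>(h, \<beta>). (h, H (I r) \<beta>)) \<circ> (\<lambda>g. (M d g, H \<Psi> (I g)))) (hom C y L) (algs y)" .
    moreover have "((\<lambda>(h, \<beta>). (h, H (I r) \<beta>)) \<circ> (\<lambda>g. (M d g, H \<Psi> (I g)))) g =
        (M d g, H (H (I r) \<Psi>) (I g))" if "g \<in> hom C y L" for g
      using \<Psi>g[OF \<Psi> d(1,3), of g] d that by (simp add: hom_iff)
    ultimately show ?thesis by (rule bij_betw_cong[THEN iffD1, rotated])
  qed
  have B: "bij_betw (\<lambda>\<xi>. H (I d) \<xi>) (cells C g g')
            {\<xi> \<in> cells C (M d g) (M d g').
               V \<xi> (H (H (I r) \<Psi>) (I g)) = V (H (H (I r) \<Psi>) (I g')) (H (I t) \<xi>)}"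
    if y: "y \<in> Obj C" and g: "g \<in> hom C y L" "g' \<in> hom C y L" for y g g'
  proof -
    have "bij_betw (\<lambda>\<xi>. H (I d) \<xi>) (cells C g g')
            (desc_mor C d0 d1 (M d g) (H \<Psi> (I g)) (M d g') (H \<Psi> (I g')))"
      using lax_D(2)[OF lax y g] .
    moreover have "desc_mor C d0 d1 (M d g) (H \<Psi> (I g)) (M d g') (H \<Psi> (I g')) =
       {\<xi> \<in> cells C (M d g) (M d g'). V \<xi> (H (H (I r) \<Psi>) (I g)) = V (H (H (I r) \<Psi>) (I g')) (H (I t) \<xi>)}"
      using mor_set[OF \<Psi> d(1,3)] g d by (simp add: hom_iff)
    ultimately show ?thesis by simp
  qed
  have \<mu>: "H (I r) \<Psi> \<in> cells C (M t d) d" using F_cells[OF d(1,3) \<Psi>] .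
  show ?thesis unfolding em_object_def algs_def[symmetric]
    apply (intro conjI ballI)
    subgoal by (rule L)
    subgoal using d by (simp add: hom_iff)
    subgoal by (rule \<mu>)
    subgoal for y by (rule A)
    subgoal for y g g' by (rule B)
    done
qed

lemma G_whisk: "\<mu> \<in> cells C (M t u) u \<Longrightarrow> u \<in> Arr C \<Longrightarrow> trg C u = b \<Longrightarrow> g \<in> Arr C \<Longrightarrow> trg C g = src C u \<Longrightarrow>
   H (G u \<mu>) (I g) = G (M u g) (H \<mu> (I g))"
proof -
  assume a: "\<mu> \<in> cells C (M t u) u" "u \<in> Arr C" "trg C u = b" "g \<in> Arr C" "trg C g = src C u"
  have a1: "H \<sigma> (I u) \<in> cells C (M d1 u) (M d0 (M t u))" using wr_cellsA[OF \<sigma>, of u] a by simp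
  have a2: "H (I d0) \<mu> \<in> cells C (M d0 (M t u)) (M d0 u)" using wl_cellsA[OF a(1), of d0] a by simp
  have "H (G u \<mu>) (I g) = V (H (H (I d0) \<mu>) (I g)) (H (H \<sigma> (I u)) (I g))"
    unfolding G_def using wr_vcA[OF a1 a2, of g] a by simp
  also have "H (H (I d0) \<mu>) (I g) = H (I d0) (H \<mu> (I g))" using wlrA[OF a(1), of g d0] a by simp
  also have "H (H \<sigma> (I u)) (I g) = H \<sigma> (I (M u g))" using wrrA[OF \<sigma>, of u g] a by simp
  finally show ?thesis unfolding G_def .
qed

lemma em_to_lax:
  assumes em: "em_object C (trg C p) t (cod_mult C p t \<gamma>) (cod_unit C p t \<gamma>) B u \<mu>"
  shows "lax_descent C p P d0 d1 \<alpha> P3 D0 D2 B u (G u \<mu>)"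
proof -
  have Bo: "B \<in> Obj C" and u: "u \<in> Arr C" "src C u = B" "trg C u = b" and \<mu>: "\<mu> \<in> cells C (M t u) u"
    using em_D0[OF em] by (auto simp: hom_iff)
  have \<Psi>: "G u \<mu> \<in> cells C (M d1 u) (M d0 u)" using G_cells[OF u(1,3) \<mu>] .
  have r\<Psi>: "H (I r) (G u \<mu>) = \<mu>" using FG[OF u(1,3) \<mu>] .
  have A: "bij_betw (\<lambda>g. (M u g, H (G u \<mu>) (I g))) (hom C y B) (desc_obj C p P d0 d1 \<alpha> P3 D0 D2 y)"
    if y: "y \<in> Obj C" for y
  proof -
    have "bij_betw (\<lambda>g. (M u g, H \<mu> (I g))) (hom C y B) (algs y)"
      using em_D(1)[OF em y] .
    from bij_betw_trans[OF this algs_desc]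
    have "bij_betw ((\<lambda>(h, \<theta>). (h, G h \<theta>)) \<circ> (\<lambda>g. (M u g, H \<mu> (I g)))) (hom C y B) (desc_obj C p P d0 d1 \<alpha> P3 D0 D2 y)" .
    moreover have "((\<lambda>(h, \<theta>). (h, G h \<theta>)) \<circ> (\<lambda>g. (M u g, H \<mu> (I g)))) g =
        (M u g, H (G u \<mu>) (I g))" if "g \<in> hom C y B" for g
      using G_whisk[OF \<mu> u(1,3), of g] u that by (simp add: hom_iff)
    ultimately show ?thesis by (rule bij_betw_cong[THEN iffD1, rotated])
  qed
  have B: "bij_betw (\<lambda>\<xi>. H (I u) \<xi>) (cells C g g')
            (desc_mor C d0 d1 (M u g) (H (G u \<mu>) (I g)) (M u g') (H (G u \<mu>) (I g')))"
    if y: "y \<in> Obj C" and g: "g \<in> hom C y B" "g' \<in> hom C y B" for y g g'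
  proof -
    have "bij_betw (\<lambda>\<xi>. H (I u) \<xi>) (cells C g g')
            {\<xi> \<in> cells C (M u g) (M u g').
               V \<xi> (H \<mu> (I g)) = V (H \<mu> (I g')) (H (I t) \<xi>)}"
      using em_D(2)[OF em y g] .
    moreover have "desc_mor C d0 d1 (M u g) (H (G u \<mu>) (I g)) (M u g') (H (G u \<mu>) (I g')) =
       {\<xi> \<in> cells C (M u g) (M u g'). V \<xi> (H \<mu> (I g)) = V (H \<mu> (I g')) (H (I t) \<xi>)}"
      using mor_set[OF \<Psi> u(1,3)] g u r\<Psi> by (simp add: hom_iff)
    ultimately show ?thesis by simp
  qed
  show ?thesis unfolding lax_descent_def
    apply (intro conjI ballI)
    subgoal by (rule Bo)
    subgoal using u by (simp add: hom_iff)
    subgoal by (rule \<Psi>)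
    subgoal for y by (rule A)
    subgoal for y g g' by (rule B)
    done
qed

lemma pHT: "d \<in> Arr C \<Longrightarrow> trg C d = b \<Longrightarrow> src C d = L \<Longrightarrow> \<Psi> \<in> cells C (M d1 d) (M d0 d) \<Longrightarrow>
   pH C p \<alpha> L d \<Psi> = pT C p \<gamma> L d (H (I r) \<Psi>)"
proof -
  assume d: "d \<in> Arr C" "trg C d = b" "src C d = L" and \<Psi>: "\<Psi> \<in> cells C (M d1 d) (M d0 d)"
  have "(k \<in> hom C (src C p) L \<and> M d k = p \<and> H \<Psi> (I k) = \<alpha>) \<longleftrightarrow>
        (k \<in> hom C (src C p) L \<and> M d k = p \<and> H (H (I r) \<Psi>) (I k) = \<gamma>)" for k
  proof (cases "k \<in> hom C (src C p) L \<and> M d k = p")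
    case True
    hence k: "k \<in> Arr C" "trg C k = src C d" "M d k = p"
      using \<Psi> d cells_arr[OF \<Psi>] by (auto simp: hom_iff)
    note x = \<Psi>g[OF \<Psi> d(1,2) k(1,2)]
    have c: "H \<Psi> (I k) \<in> cells C (M d1 p) (M d0 p)" using x k(3) by simp
    have "H \<Psi> (I k) = \<alpha> \<longleftrightarrow> H (I r) (H \<Psi> (I k)) = H (I r) \<alpha>"
      using rep1_inj[of p p, OF _ _ _ _ c \<alpha>] by auto
    thus ?thesis using x r(4) True by simp
  qed auto
  thus ?thesis unfolding pH_def pT_def by simp
qed

lemma main_iff:
  "(\<exists>B u \<mu>. em_object C (trg C p) t (cod_mult C p t \<gamma>) (cod_unit C p t \<gamma>) B u \<mu> \<and> equivalence C (pT C p \<gamma> B u \<mu>))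
   \<longleftrightarrow> (\<exists>L d \<Psi>. lax_descent C p P d0 d1 \<alpha> P3 D0 D2 L d \<Psi> \<and> equivalence C (pH C p \<alpha> L d \<Psi>))"
proof
  assume "\<exists>B u \<mu>. em_object C (trg C p) t (cod_mult C p t \<gamma>) (cod_unit C p t \<gamma>) B u \<mu> \<and> equivalence C (pT C p \<gamma> B u \<mu>)"
  then obtain B u \<mu> where em: "em_object C (trg C p) t (cod_mult C p t \<gamma>) (cod_unit C p t \<gamma>) B u \<mu>"
    and eq: "equivalence C (pT C p \<gamma> B u \<mu>)" by blast
  have u: "u \<in> Arr C" "trg C u = b" "src C u = B" and \<mu>: "\<mu> \<in> cells C (M t u) u"
    using em_D0[OF em] by (auto simp: hom_iff)
  have "pH C p \<alpha> B u (G u \<mu>) = pT C p \<gamma> B u \<mu>"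
    using pHT[OF u G_cells[OF u(1,2) \<mu>]] FG[OF u(1,2) \<mu>] by simp
  thus "\<exists>L d \<Psi>. lax_descent C p P d0 d1 \<alpha> P3 D0 D2 L d \<Psi> \<and> equivalence C (pH C p \<alpha> L d \<Psi>)"
    using em_to_lax[OF em] eq by metis
next
  assume "\<exists>L d \<Psi>. lax_descent C p P d0 d1 \<alpha> P3 D0 D2 L d \<Psi> \<and> equivalence C (pH C p \<alpha> L d \<Psi>)"
  then obtain L d \<Psi> where lax: "lax_descent C p P d0 d1 \<alpha> P3 D0 D2 L d \<Psi>"
    and eq: "equivalence C (pH C p \<alpha> L d \<Psi>)" by blast
  have d: "d \<in> Arr C" "trg C d = b" "src C d = L" and \<Psi>: "\<Psi> \<in> cells C (M d1 d) (M d0 d)"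
    using lax_D0[OF lax] by (auto simp: hom_iff)
  show "\<exists>B u \<mu>. em_object C (trg C p) t (cod_mult C p t \<gamma>) (cod_unit C p t \<gamma>) B u \<mu> \<and> equivalence C (pT C p \<gamma> B u \<mu>)"
    using lax_to_em[OF lax] eq pHT[OF d \<Psi>] by metis
qed

end

context tc
begin

lemma sigma_transfer:
  assumes p: "p \<in> hom C e b" and d0: "d0 \<in> hom C b P"
    and rn: "ran C p p t \<gamma>" and rn': "ran C p p t' \<gamma>'"
    and \<sigma>: "\<sigma> \<in> cells C d1 (M d0 t)" and eq: "V (H (I d0) \<gamma>) (H \<sigma> (I p)) = \<alpha>"
  shows "\<exists>\<sigma>'. \<sigma>' \<in> cells C d1 (M d0 t') \<and> V (H (I d0) \<gamma>') (H \<sigma>' (I p)) = \<alpha>"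
proof -
  have pa: "p \<in> Arr C" "src C p = e" "trg C p = b" using p by (auto simp: hom_iff)
  have da: "d0 \<in> Arr C" "src C d0 = b" "trg C d0 = P" using d0 by (auto simp: hom_iff)
  have t: "t \<in> hom C b b" and \<gamma>: "\<gamma> \<in> cells C (M t p) p" using rn pa unfolding ran_def by auto
  have t': "t' \<in> hom C b b" and \<gamma>': "\<gamma>' \<in> cells C (M t' p) p" using rn' pa unfolding ran_def by auto
  have ta: "t \<in> Arr C" "src C t = b" "trg C t = b" "t' \<in> Arr C" "src C t' = b" "trg C t' = b"
    using t t' by (auto simp: hom_iff)
  have "bij_betw (\<lambda>\<beta>. V \<gamma>' (H \<beta> (I p))) (cells C t t') (cells C (M t p) p)"
    using rn' t pa unfolding ran_def by auto
  then obtain \<psi> where \<psi>: "\<psi> \<in> cells C t t'" and \<psi>eq: "V \<gamma>' (H \<psi> (I p)) = \<gamma>"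
    using \<gamma> unfolding bij_betw_def by force
  have d\<psi>: "H (I d0) \<psi> \<in> cells C (M d0 t) (M d0 t')" using wl_cellsA[OF \<psi>, of d0] da ta by simp
  define \<sigma>' where "\<sigma>' = V (H (I d0) \<psi>) \<sigma>"
  have c: "\<sigma>' \<in> cells C d1 (M d0 t')" unfolding \<sigma>'_def using vc_cells[OF \<sigma> d\<psi>] .
  have d1a: "d1 \<in> Arr C" "src C d1 = b" "trg C d1 = P" using cells_arr[OF \<sigma>] da ta by auto
  have \<psi>p: "H \<psi> (I p) \<in> cells C (M t p) (M t' p)" using wr_cellsA[OF \<psi>, of p] pa ta by simp
  have \<sigma>p: "H \<sigma> (I p) \<in> cells C (M d1 p) (M d0 (M t p))" using wr_cellsA[OF \<sigma>, of p] pa ta da d1a by simp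
  have d\<psi>p: "H (I d0) (H \<psi> (I p)) \<in> cells C (M d0 (M t p)) (M d0 (M t' p))"
    using wl_cellsA[OF \<psi>p, of d0] pa ta da by simp
  have d\<gamma>': "H (I d0) \<gamma>' \<in> cells C (M d0 (M t' p)) (M d0 p)" using wl_cellsA[OF \<gamma>', of d0] pa ta da by simp
  have "H \<sigma>' (I p) = V (H (H (I d0) \<psi>) (I p)) (H \<sigma> (I p))"
    unfolding \<sigma>'_def using wr_vcA[OF \<sigma> d\<psi>, of p] pa d1a by simp
  also have "H (H (I d0) \<psi>) (I p) = H (I d0) (H \<psi> (I p))" using wlrA[OF \<psi>, of p d0] pa ta da by simp
  finally have e1: "H \<sigma>' (I p) = V (H (I d0) (H \<psi> (I p))) (H \<sigma> (I p))" .
  have "V (H (I d0) \<gamma>') (H \<sigma>' (I p)) = V (V (H (I d0) \<gamma>') (H (I d0) (H \<psi> (I p)))) (H \<sigma> (I p))"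
    unfolding e1 using vc_assoc[OF \<sigma>p d\<psi>p d\<gamma>'] .
  also have "V (H (I d0) \<gamma>') (H (I d0) (H \<psi> (I p))) = H (I d0) \<gamma>"
    using wl_vcA[OF \<psi>p \<gamma>', of d0] \<psi>eq pa ta da by simp
  finally show ?thesis using c eq by blast
qed

end

lemma thm1:
  assumes tc: "twocat C" and p: "p \<in> hom C e b" and cd: "cokernel_diagram C p P d0 d1 \<alpha> P3 D0 D2"
    and ex: "\<exists>t \<gamma>. ran C p p t \<gamma> \<and> preserves_ran C p p t \<gamma> d0"
  shows "monadic C p \<longleftrightarrow> effective_faithful C p P d0 d1 \<alpha> P3 D0 D2"
proof -
  interpret tc C by (rule tc.intro[OF tc])
  have oc: "opcomma C p P d0 d1 \<alpha>" and po: "pushout2 C d0 d1 P3 D2 D0"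
    using cd unfolding cokernel_diagram_def by auto
  have pa: "p \<in> Arr C" "src C p = e" "trg C p = b" using p by (auto simp: hom_iff)
  have d0: "d0 \<in> hom C b P" and d1: "d1 \<in> hom C b P" and \<alpha>: "\<alpha> \<in> cells C (M d1 p) (M d0 p)"
    using oc pa unfolding opcomma_def by auto
  obtain t \<gamma> where rn: "ran C p p t \<gamma>" and pr: "preserves_ran C p p t \<gamma> d0" using ex by blast
  have "ran C p (M d0 p) (M d0 t) (H (I d0) \<gamma>)" using pr unfolding preserves_ran_def by blast
  hence "bij_betw (\<lambda>\<beta>. V (H (I d0) \<gamma>) (H \<beta> (I p))) (cells C d1 (M d0 t)) (cells C (M d1 p) (M d0 p))"
    using d1 d0 pa unfolding ran_def by (auto simp: hom_iff)
  then obtain \<sigma> where \<sigma>: "\<sigma> \<in> cells C d1 (M d0 t)" and \<sigma>eq: "V (H (I d0) \<gamma>) (H \<sigma> (I p)) = \<alpha>"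
    using \<alpha> unfolding bij_betw_def by force
  show ?thesis
  proof
    assume "monadic C p"
    then obtain t' \<gamma>' where rn': "ran C p p t' \<gamma>'" and
      em: "\<exists>B u \<mu>. em_object C (trg C p) t' (cod_mult C p t' \<gamma>') (cod_unit C p t' \<gamma>') B u \<mu> \<and>
                  equivalence C (pT C p \<gamma>' B u \<mu>)"
      unfolding monadic_def by blast
    obtain \<sigma>' where \<sigma>': "\<sigma>' \<in> cells C d1 (M d0 t')" and \<sigma>'eq: "V (H (I d0) \<gamma>') (H \<sigma>' (I p)) = \<alpha>"
      using sigma_transfer[OF p d0 rn rn' \<sigma> \<sigma>eq] by blast
    interpret m: main C p e b P d0 d1 \<alpha> P3 D0 D2 t' \<gamma>' \<sigma>'
      by (unfold_locales; (rule p oc po rn' \<sigma>' \<sigma>'eq)?)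
    show "effective_faithful C p P d0 d1 \<alpha> P3 D0 D2"
      unfolding effective_faithful_def using cd m.main_iff em by blast
  next
    assume "effective_faithful C p P d0 d1 \<alpha> P3 D0 D2"
    hence ef: "\<exists>L d \<Psi>. lax_descent C p P d0 d1 \<alpha> P3 D0 D2 L d \<Psi> \<and> equivalence C (pH C p \<alpha> L d \<Psi>)"
      unfolding effective_faithful_def by blast
    interpret m: main C p e b P d0 d1 \<alpha> P3 D0 D2 t \<gamma> \<sigma>
      by (unfold_locales; (rule p oc po rn \<sigma> \<sigma>eq)?)
    show "monadic C p" unfolding monadic_def using rn m.main_iff ef by blast
  qed
qed


lemma co_simps [simp]: "Obj (co C) = Obj C" "Arr (co C) = Arr C" "src (co C) = src C" "trg (co C) = trg C"
  "Cell (co C) = Cell C" "dom2 (co C) = cod2 C" "cod2 (co C) = dom2 C" "cmp (co C) = cmp C"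
  "ide (co C) = ide C" "vc (co C) = (\<lambda>\<beta> \<alpha>. vc C \<alpha> \<beta>)" "hc (co C) = hc C" "i2 (co C) = i2 C"
  by (simp_all add: co_def)

lemma hom_co [simp]: "hom (co C) = hom C"
  by (simp add: hom_def fun_eq_iff)

lemma cells_co [simp]: "cells (co C) f g = cells C g f"
  by (auto simp: cells_def)

lemma twocat_co: assumes "twocat C" shows "twocat (co C)"
proof -
  interpret tc C by (rule tc.intro[OF assms])
  show ?thesis unfolding twocat_def co_simps hom_co cells_co
    apply (intro conjI allI impI ballI)
    subgoal for f using hom_obj[OF homI] by blast
    subgoal for f using hom_obj[OF homI] by blast
    subgoal for x using ide_hom by blast
    subgoal for f g by (simp add: hom_iff)
    subgoal for f by simp
    subgoal for f by simp
    subgoal for f g h by simp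
    subgoal for \<theta> using cells_arr[of \<theta> "dom2 C \<theta>" "cod2 C \<theta>"] by (simp add: cells_def)
    subgoal for \<theta> using cells_arr[of \<theta> "dom2 C \<theta>" "cod2 C \<theta>"] by (simp add: cells_def)
    subgoal for \<theta> using cells_arr[of \<theta> "dom2 C \<theta>" "cod2 C \<theta>"] by (simp add: cells_def)
    subgoal for \<theta> using cells_arr[of \<theta> "dom2 C \<theta>" "cod2 C \<theta>"] by (simp add: cells_def)
    subgoal for f using i2_cellsA by blast
    subgoal for f g h \<alpha> \<beta> using vc_cells by blast
    subgoal for f g \<alpha> using vc_idl by blast
    subgoal for f g \<alpha> using vc_idr by blast
    subgoal for f g h k \<alpha> \<beta> \<gamma> using vc_assoc by metis
    subgoal for f f' g g' \<alpha> \<beta> using hc_cellsA cells_arr by metis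
    subgoal for f g using hc_i2A by blast
    subgoal for f f' f'' g g' g'' \<alpha> \<alpha>' \<beta> \<beta>'
      using interchange[of \<alpha>' f'' f' \<alpha> f \<beta>' g'' g' \<beta> g] cells_arr[of \<alpha> f' f] cells_arr[of \<alpha>' f'' f']
        cells_arr[of \<beta> g' g] cells_arr[of \<beta>' g'' g'] by (simp add: hom_iff)
    subgoal for f f' g g' h h' \<alpha> \<beta> \<gamma>
      using hc_assoc[of \<alpha> f' f \<beta> g' g \<gamma> h' h] cells_arr[of \<alpha> f' f] cells_arr[of \<beta> g' g] cells_arr[of \<gamma> h' h]
      by (simp add: hom_iff)
    subgoal for f f' \<alpha> using hc_unit_lA cells_arr by metis
    subgoal for f f' \<alpha> using hc_unit_rA cells_arr by metis
    done
qed


lemma bij_betw_post: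
  assumes "bij_betw f A B" "inj s" "\<And>x. x \<in> A \<Longrightarrow> g x = s (f x)" "B' = s ` B"
  shows "bij_betw g A B'"
proof -
  have "bij_betw s B (s ` B)" by (rule inj_on_imp_bij_betw[OF inj_on_subset[OF assms(2) subset_UNIV]])
  from bij_betw_trans[OF assms(1) this] have "bij_betw (s \<circ> f) A B'" using assms(4) by simp
  thus ?thesis by (rule bij_betw_cong[THEN iffD1, rotated]) (simp add: assms(3))
qed

lemma inj_swap3: "inj (\<lambda>(a, b, c). (b, a, c))"
  by (auto simp: inj_def)

lemma opcomma_co:
  assumes "opcomma C p P d0 d1 \<alpha>"
  shows "opcomma (co C) p P d1 d0 \<alpha>"
proof -
  have A: "p \<in> Arr C \<and> P \<in> Obj C \<and> d1 \<in> hom C (trg C p) P \<and> d0 \<in> hom C (trg C p) P \<and>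
     \<alpha> \<in> cells C (cmp C d1 p) (cmp C d0 p)" using assms unfolding opcomma_def by blast
  have B: "\<forall>y \<in> Obj C.
        bij_betw (\<lambda>h. (cmp C h d0, cmp C h d1, hc C (i2 C h) \<alpha>)) (hom C P y)
          {(h0, h1, \<beta>). h0 \<in> hom C (trg C p) y \<and> h1 \<in> hom C (trg C p) y \<and>
                       \<beta> \<in> cells C (cmp C h1 p) (cmp C h0 p)} \<and>
        (\<forall>h \<in> hom C P y. \<forall>h' \<in> hom C P y.
          bij_betw (\<lambda>\<xi>. (hc C \<xi> (i2 C d0), hc C \<xi> (i2 C d1))) (cells C h h')
            {(\<xi>0, \<xi>1). \<xi>0 \<in> cells C (cmp C h d0) (cmp C h' d0) \<and>
                       \<xi>1 \<in> cells C (cmp C h d1) (cmp C h' d1) \<and>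
                       vc C (hc C \<xi>0 (i2 C p)) (hc C (i2 C h) \<alpha>) =
                       vc C (hc C (i2 C h') \<alpha>) (hc C \<xi>1 (i2 C p))})"
    using assms unfolding opcomma_def by blast
  show ?thesis unfolding opcomma_def co_simps hom_co cells_co
  proof (intro conjI ballI)
    show "p \<in> Arr C" "P \<in> Obj C" "d1 \<in> hom C (trg C p) P" "d0 \<in> hom C (trg C p) P"
      "\<alpha> \<in> cells C (cmp C d1 p) (cmp C d0 p)" using A by auto
  next
    fix y assume y: "y \<in> Obj C"
    show "bij_betw (\<lambda>h. (cmp C h d1, cmp C h d0, hc C (i2 C h) \<alpha>)) (hom C P y)
          {(h0, h1, \<beta>). h0 \<in> hom C (trg C p) y \<and> h1 \<in> hom C (trg C p) y \<and>
                       \<beta> \<in> cells C (cmp C h0 p) (cmp C h1 p)}"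
      by (rule bij_betw_post[OF B[rule_format, OF y, THEN conjunct1] inj_swap3]) (auto simp: image_iff)
    fix h h' assume h: "h \<in> hom C P y" "h' \<in> hom C P y"
    show "bij_betw (\<lambda>\<xi>. (hc C \<xi> (i2 C d1), hc C \<xi> (i2 C d0))) (cells C h' h)
            {(\<xi>0, \<xi>1). \<xi>0 \<in> cells C (cmp C h' d1) (cmp C h d1) \<and>
                       \<xi>1 \<in> cells C (cmp C h' d0) (cmp C h d0) \<and>
                       vc C (hc C (i2 C h) \<alpha>) (hc C \<xi>0 (i2 C p)) =
                       vc C (hc C \<xi>1 (i2 C p)) (hc C (i2 C h') \<alpha>)}"
      by (rule bij_betw_post[OF B[rule_format, OF y, THEN conjunct2, rule_format, OF h(2) h(1)] inj_swap])
        (auto simp: image_iff)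
  qed
qed

lemma pushout2_co:
  assumes "pushout2 C f0 f1 Q q0 q1"
  shows "pushout2 (co C) f1 f0 Q q1 q0"
proof -
  have A: "f0 \<in> Arr C \<and> f1 \<in> Arr C \<and> src C f0 = src C f1 \<and> Q \<in> Obj C \<and>
     q0 \<in> hom C (trg C f0) Q \<and> q1 \<in> hom C (trg C f1) Q \<and> cmp C q0 f0 = cmp C q1 f1"
    using assms unfolding pushout2_def by blast
  have B: "\<forall>y \<in> Obj C.
        bij_betw (\<lambda>k. (cmp C k q0, cmp C k q1)) (hom C Q y)
          {(k0, k1). k0 \<in> hom C (trg C f0) y \<and> k1 \<in> hom C (trg C f1) y \<and>
                     cmp C k0 f0 = cmp C k1 f1} \<and>
        (\<forall>k \<in> hom C Q y. \<forall>k' \<in> hom C Q y.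
          bij_betw (\<lambda>\<xi>. (hc C \<xi> (i2 C q0), hc C \<xi> (i2 C q1))) (cells C k k')
            {(\<xi>0, \<xi>1). \<xi>0 \<in> cells C (cmp C k q0) (cmp C k' q0) \<and>
                       \<xi>1 \<in> cells C (cmp C k q1) (cmp C k' q1) \<and>
                       hc C \<xi>0 (i2 C f0) = hc C \<xi>1 (i2 C f1)})"
    using assms unfolding pushout2_def by blast
  show ?thesis unfolding pushout2_def co_simps hom_co cells_co
  proof (intro conjI ballI)
    show "f1 \<in> Arr C" "f0 \<in> Arr C" "src C f1 = src C f0" "Q \<in> Obj C" "q1 \<in> hom C (trg C f1) Q"
      "q0 \<in> hom C (trg C f0) Q" "cmp C q1 f1 = cmp C q0 f0" using A by auto
  next
    fix y assume y: "y \<in> Obj C"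
    show "bij_betw (\<lambda>k. (cmp C k q1, cmp C k q0)) (hom C Q y)
          {(k0, k1). k0 \<in> hom C (trg C f1) y \<and> k1 \<in> hom C (trg C f0) y \<and>
                     cmp C k0 f1 = cmp C k1 f0}"
      by (rule bij_betw_post[OF B[rule_format, OF y, THEN conjunct1] inj_swap]) (auto simp: image_iff)
    fix k k' assume k: "k \<in> hom C Q y" "k' \<in> hom C Q y"
    show "bij_betw (\<lambda>\<xi>. (hc C \<xi> (i2 C q1), hc C \<xi> (i2 C q0))) (cells C k' k)
            {(\<xi>0, \<xi>1). \<xi>0 \<in> cells C (cmp C k' q1) (cmp C k q1) \<and>
                       \<xi>1 \<in> cells C (cmp C k' q0) (cmp C k q0) \<and>
                       hc C \<xi>0 (i2 C f1) = hc C \<xi>1 (i2 C f0)}"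
      by (rule bij_betw_post[OF B[rule_format, OF y, THEN conjunct2, rule_format, OF k(2) k(1)] inj_swap])
        (auto simp: image_iff)
  qed
qed

lemma cokernel_co:
  "cokernel_diagram C p P d0 d1 \<alpha> P3 D0 D2 \<Longrightarrow> cokernel_diagram (co C) p P d1 d0 \<alpha> P3 D2 D0"
  unfolding cokernel_diagram_def using opcomma_co[of C p P d0 d1 \<alpha>] pushout2_co[of C d0 d1 P3 D2 D0] by blast


lemma cokD1_co: "cokD1 (co C) p P d1 d0 \<alpha> P3 D2 D0 = cokD1 C p P d0 d1 \<alpha> P3 D0 D2"
  unfolding cokD1_def co_simps hom_co by (rule arg_cong[where f = The]) (rule ext, blast)

lemma cokS0_co: "cokS0 (co C) p P d1 d0 \<alpha> = cokS0 C p P d0 d1 \<alpha>"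
  unfolding cokS0_def co_simps hom_co by (rule arg_cong[where f = The]) (rule ext, blast)

lemma desc_obj_co: "desc_obj (co C) p P d1 d0 \<alpha> P3 D2 D0 y = desc_obj C p P d0 d1 \<alpha> P3 D0 D2 y"
  unfolding desc_obj_def cokD1_co cokS0_co by simp

lemma desc_mor_co: "desc_mor (co C) d1 d0 h1 \<beta>1 h0 \<beta>0 = desc_mor C d0 d1 h0 \<beta>0 h1 \<beta>1"
  unfolding desc_mor_def by auto

lemma lax_co: "lax_descent (co C) p P d1 d0 \<alpha> P3 D2 D0 L d \<Psi> \<longleftrightarrow> lax_descent C p P d0 d1 \<alpha> P3 D0 D2 L d \<Psi>"
  unfolding lax_descent_def desc_obj_co desc_mor_co co_simps hom_co cells_co by blast

lemma pH_co: "pH (co C) p \<alpha> L d \<Psi> = pH C p \<alpha> L d \<Psi>"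
  unfolding pH_def co_simps hom_co by simp

lemma invertible2_co: "invertible2 (co C) \<theta> \<longleftrightarrow> invertible2 C \<theta>"
  unfolding invertible2_def co_simps cells_co by auto

lemma inv_flip: "\<theta> \<in> cells C A B \<Longrightarrow> invertible2 C \<theta> \<Longrightarrow> \<exists>\<theta>' \<in> cells C B A. invertible2 C \<theta>'"
proof -
  assume t: "\<theta> \<in> cells C A B" and i: "invertible2 C \<theta>"
  then obtain \<theta>' where t': "\<theta>' \<in> cells C B A" and e: "vc C \<theta>' \<theta> = i2 C A" "vc C \<theta> \<theta>' = i2 C B"
    unfolding invertible2_def cells_def by auto
  have "invertible2 C \<theta>'" unfolding invertible2_def using t t' e by (auto simp: cells_def)
  thus ?thesis using t' by blast
qed

lemma equivalence_co: "equivalence (co C) f \<longleftrightarrow> equivalence C f"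
  unfolding equivalence_def co_simps hom_co cells_co invertible2_co using inv_flip by metis

lemma ef_co:
  assumes "cokernel_diagram C p P d0 d1 \<alpha> P3 D0 D2"
  shows "effective_faithful (co C) p P d1 d0 \<alpha> P3 D2 D0 \<longleftrightarrow> effective_faithful C p P d0 d1 \<alpha> P3 D0 D2"
  unfolding effective_faithful_def lax_co pH_co equivalence_co using assms cokernel_co[OF assms] by blast

lemma thm2:
  assumes tc: "twocat C" and p: "p \<in> hom C e b" and cd: "cokernel_diagram C p P d0 d1 \<alpha> P3 D0 D2"
    and ex: "\<exists>t \<gamma>. lan C p p t \<gamma> \<and> preserves_lan C p p t \<gamma> d1"
  shows "comonadic C p \<longleftrightarrow> effective_faithful C p P d0 d1 \<alpha> P3 D0 D2"
proof -
  have "monadic (co C) p \<longleftrightarrow> effective_faithful (co C) p P d1 d0 \<alpha> P3 D2 D0"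
    by (rule thm1[OF twocat_co[OF tc] _ cokernel_co[OF cd]])
      (use p ex in \<open>simp_all add: lan_def preserves_lan_def\<close>)
  thus ?thesis unfolding comonadic_def ef_co[OF cd] .
qed

theorem corollary5p9:
  fixes C :: "('o,'a,'c) tcat" and p :: 'a and e b P P3 :: 'o
    and d0 d1 D0 D2 :: 'a and \<alpha> :: 'c
  assumes "twocat C"
    and "p \<in> hom C e b"
    and "cokernel_diagram C p P d0 d1 \<alpha> P3 D0 D2"
  shows "((\<exists>t \<gamma>. ran C p p t \<gamma> \<and> preserves_ran C p p t \<gamma> d0) \<longrightarrow>
           (monadic C p \<longleftrightarrow> effective_faithful C p P d0 d1 \<alpha> P3 D0 D2)) \<and>
         ((\<exists>t \<gamma>. lan C p p t \<gamma> \<and> preserves_lan C p p t \<gamma> d1) \<longrightarrow>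
           (comonadic C p \<longleftrightarrow> effective_faithful C p P d0 d1 \<alpha> P3 D0 D2))"
  using thm1[OF assms] thm2[OF assms] by blast

end
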